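(* Let $d\ge 2$, $\eta\in[0,1]$ and $\epsilon\in[0,1]$, and let $\mathcal{M}_\eta$ be the quantum erasure channel on $\mathcal{H}_X\cong\mathbb{C}^d$ (defined in the context). Call a quantum channel (CPTP map) $\Lambda:\mathcal{L}(\mathcal{H}_X)\to\mathcal{L}(\mathcal{H}_X)$ admissible if $$F\big(\mathcal{M}_\eta(\rho),\,\mathcal{M}_\eta(\Lambda(\rho))\big)\ \ge\ 1-\epsilon\quad\text{for every density operator }\rho\text{ on }\mathcal{H}_X .$$ Then: (i) If $\eta^2\ge 1-\epsilon$, the channel $\Lambda(\rho)=\mathrm{Tr}(\rho)\,|1\rangle\langle 1|$ (for a fixed unit vector $|1\rangle\in\mathcal{H}_X$) is admissible, and its vector kernel $\mathcal{K}(\Lambda)$ has dimension $d-1$, so that its compressibility $\dim\mathcal{K}(\Lambda)/(d-1)$ equals $1$ (the maximum possible value). (ii) If $\eta^2<1-\epsilon$, then every admissible channel $\Lambda$ has trivial vector kernel, $\mathcal{K}(\Lambda)=\{0\}$, i.e. compressibility $0$.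
   Context: Fidelity of density operators: $F(\rho,\sigma)=\big[\mathrm{Tr}\sqrt{\sqrt{\rho}\,\sigma\sqrt{\rho}}\big]^2$. Quantum erasure channel: let $\mathcal{H}_Y=\mathcal{H}_X\oplus\mathrm{span}\{|\alpha\rangle\}\cong\mathbb{C}^{d+1}$, where $|\alpha\rangle$ is a unit vector orthogonal to $\mathcal{H}_X$; $\mathcal{M}_\eta:\mathcal{L}(\mathcal{H}_X)\to\mathcal{L}(\mathcal{H}_Y)$, $\mathcal{M}_\eta(\rho)=(1-\eta)\rho+\eta\,\mathrm{Tr}(\rho)|\alpha\rangle\langle\alpha|$. Vector kernel of a linear map $\Lambda:\mathcal{L}(\mathcal{H}_X)\to\mathcal{L}(\mathcal{H}_X)$: $\mathcal{K}(\Lambda)=\{|\psi\rangle\in\mathcal{H}_X:\ \Lambda(\rho)|\psi\rangle=0\ \text{for all density operators }\rho\}$, a subspace of $\mathcal{H}_X$. The quantum compressibility of $\Lambda$ is $\dim\mathcal{K}(\Lambda)/(d-1)$. *)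

theory Defs
  imports "Jordan_Normal_Form.Matrix" "Jordan_Normal_Form.VS_Connect"
begin

definition mtrace :: "complex mat \<Rightarrow> complex" where
  "mtrace A = (\<Sum>i<dim_row A. A $$ (i, i))"

definition psd :: "complex mat \<Rightarrow> bool" where
  "psd A \<longleftrightarrow> A \<in> carrier_mat (dim_row A) (dim_row A) \<and>
     (\<forall>v \<in> carrier_vec (dim_row A).
        Im ((A *\<^sub>v v) \<bullet>c v) = 0 \<and> 0 \<le> Re ((A *\<^sub>v v) \<bullet>c v))"

definition density :: "nat \<Rightarrow> complex mat \<Rightarrow> bool" where
  "density d \<rho> \<longleftrightarrow> \<rho> \<in> carrier_mat d d \<and> psd \<rho> \<and> mtrace \<rho> = 1"

definition msqrt :: "complex mat \<Rightarrow> complex mat" where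
  "msqrt A = (THE B. B \<in> carrier_mat (dim_row A) (dim_row A) \<and> psd B \<and> B * B = A)"

definition fidelity :: "complex mat \<Rightarrow> complex mat \<Rightarrow> real" where
  "fidelity \<rho> \<sigma> = (Re (mtrace (msqrt (msqrt \<rho> * \<sigma> * msqrt \<rho>)))) ^ 2"

text \<open>Quantum erasure channel: H_Y = C^(d+1), H_X embedded as the first d coordinates,
  alpha = the last standard basis vector (index d).\<close>
definition erasure :: "nat \<Rightarrow> real \<Rightarrow> complex mat \<Rightarrow> complex mat" where
  "erasure d \<eta> \<rho> = mat (d + 1) (d + 1) (\<lambda>(i, j).
     if i < d \<and> j < d then complex_of_real (1 - \<eta>) * \<rho> $$ (i, j)
     else if i = d \<and> j = d then complex_of_real \<eta> * mtrace \<rho>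
     else 0)"

definition linear_map_on :: "nat \<Rightarrow> (complex mat \<Rightarrow> complex mat) \<Rightarrow> bool" where
  "linear_map_on d \<Lambda> \<longleftrightarrow>
     (\<forall>A \<in> carrier_mat d d. \<Lambda> A \<in> carrier_mat d d) \<and>
     (\<forall>A \<in> carrier_mat d d. \<forall>B \<in> carrier_mat d d. \<Lambda> (A + B) = \<Lambda> A + \<Lambda> B) \<and>
     (\<forall>c. \<forall>A \<in> carrier_mat d d. \<Lambda> (c \<cdot>\<^sub>m A) = c \<cdot>\<^sub>m \<Lambda> A)"

text \<open>id_n \<otimes> \<Lambda> acting on (n*d) x (n*d) matrices, C^n \<otimes> C^d with the C^n index outermost:
  \<Lambda> is applied to each d x d block.\<close>
definition ampl :: "nat \<Rightarrow> nat \<Rightarrow> (complex mat \<Rightarrow> complex mat) \<Rightarrow> complex mat \<Rightarrow> complex mat" where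
  "ampl n d \<Lambda> X = mat (n * d) (n * d) (\<lambda>(p, q).
     \<Lambda> (mat d d (\<lambda>(a, b). X $$ ((p div d) * d + a, (q div d) * d + b))) $$ (p mod d, q mod d))"

definition completely_positive :: "nat \<Rightarrow> (complex mat \<Rightarrow> complex mat) \<Rightarrow> bool" where
  "completely_positive d \<Lambda> \<longleftrightarrow>
     (\<forall>n \<ge> 1. \<forall>X \<in> carrier_mat (n * d) (n * d). psd X \<longrightarrow> psd (ampl n d \<Lambda> X))"

definition trace_preserving :: "nat \<Rightarrow> (complex mat \<Rightarrow> complex mat) \<Rightarrow> bool" where
  "trace_preserving d \<Lambda> \<longleftrightarrow> (\<forall>A \<in> carrier_mat d d. mtrace (\<Lambda> A) = mtrace A)"

definition channel :: "nat \<Rightarrow> (complex mat \<Rightarrow> complex mat) \<Rightarrow> bool" where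
  "channel d \<Lambda> \<longleftrightarrow> linear_map_on d \<Lambda> \<and> completely_positive d \<Lambda> \<and> trace_preserving d \<Lambda>"

definition vkernel :: "nat \<Rightarrow> (complex mat \<Rightarrow> complex mat) \<Rightarrow> complex vec set" where
  "vkernel d \<Lambda> = {\<psi> \<in> carrier_vec d. \<forall>\<rho>. density d \<rho> \<longrightarrow> \<Lambda> \<rho> *\<^sub>v \<psi> = 0\<^sub>v d}"

definition subspace_dim :: "nat \<Rightarrow> complex vec set \<Rightarrow> nat" where
  "subspace_dim d K = vectorspace.dim class_ring ((module_vec TYPE(complex) d)\<lparr>carrier := K\<rparr>)"

definition compressibility :: "nat \<Rightarrow> (complex mat \<Rightarrow> complex mat) \<Rightarrow> real" where
  "compressibility d \<Lambda> = real (subspace_dim d (vkernel d \<Lambda>)) / real (d - 1)"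

definition admissible :: "nat \<Rightarrow> real \<Rightarrow> real \<Rightarrow> (complex mat \<Rightarrow> complex mat) \<Rightarrow> bool" where
  "admissible d \<eta> \<epsilon> \<Lambda> \<longleftrightarrow> channel d \<Lambda> \<and>
     (\<forall>\<rho>. density d \<rho> \<longrightarrow> fidelity (erasure d \<eta> \<rho>) (erasure d \<eta> (\<Lambda> \<rho>)) \<ge> 1 - \<epsilon>)"

definition ketbra :: "complex vec \<Rightarrow> complex mat" where
  "ketbra v = mat (dim_vec v) (dim_vec v) (\<lambda>(i, j). v $ i * cnj (v $ j))"

end

theory Submission
  imports Defs "Jordan_Normal_Form.Schur_Decomposition" "Jordan_Normal_Form.Matrix_Kernel"
begin

lemma cscal: "v \<in> carrier_vec n \<Longrightarrow> w \<in> carrier_vec n \<Longrightarrow> v \<bullet>c w = (\<Sum>i<n. v$i * cnj (w$i))"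
  unfolding scalar_prod_def by (auto intro!: sum.cong)

definition adj :: "complex mat \<Rightarrow> complex mat" where
  "adj M = mat (dim_col M) (dim_row M) (\<lambda>(i,j). cnj (M $$ (j,i)))"

lemma adj_carrier[simp]: "M \<in> carrier_mat n m \<Longrightarrow> adj M \<in> carrier_mat m n"
  unfolding adj_def by auto
lemma adj_dims[simp]: "dim_row (adj M) = dim_col M" "dim_col (adj M) = dim_row M"
  unfolding adj_def by auto
lemma adj_index[simp]: "i < dim_col M \<Longrightarrow> j < dim_row M \<Longrightarrow> adj M $$ (i,j) = cnj (M $$ (j,i))"
  unfolding adj_def by auto
lemma adj_adj[simp]: "adj (adj M) = M"
  by (rule eq_matI, auto)

lemma mult_vec_index_sum: "M \<in> carrier_mat n m \<Longrightarrow> x \<in> carrier_vec m \<Longrightarrow> i < n \<Longrightarrow>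
   (M *\<^sub>v x) $ i = (\<Sum>j<m. M $$ (i,j) * x $ j)"
  by (auto simp: mult_mat_vec_def scalar_prod_def intro!: sum.cong)

lemma row_sprod: "M \<in> carrier_mat n m \<Longrightarrow> x \<in> carrier_vec m \<Longrightarrow> i < n \<Longrightarrow>
   row M i \<bullet> x = (\<Sum>j<m. M $$ (i,j) * x $ j)"
  by (auto simp: scalar_prod_def intro!: sum.cong)

lemma adj_mult_vec:
  assumes M: "M \<in> carrier_mat n m" and x: "x \<in> carrier_vec m" and y: "y \<in> carrier_vec n"
  shows "(M *\<^sub>v x) \<bullet>c y = x \<bullet>c (adj M *\<^sub>v y)"
proof -
  have "(M *\<^sub>v x) \<bullet>c y = (\<Sum>i<n. (\<Sum>j<m. M $$ (i,j) * x $ j) * cnj (y$i))"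
    using M x y by (simp add: cscal[of _ n] row_sprod)
  also have "\<dots> = (\<Sum>i<n. \<Sum>j<m. M $$ (i,j) * x $ j * cnj (y$i))"
    by (simp add: sum_distrib_right)
  also have "\<dots> = (\<Sum>j<m. \<Sum>i<n. M $$ (i,j) * x $ j * cnj (y$i))"
    by (rule sum.swap)
  also have "\<dots> = (\<Sum>j<m. x $ j * cnj (\<Sum>i<n. cnj (M $$ (i,j)) * y $ i))"
    by (simp add: sum_distrib_left mult_ac)
  also have "\<dots> = x \<bullet>c (adj M *\<^sub>v y)"
  proof -
    have c: "adj M *\<^sub>v y \<in> carrier_vec m" using M unfolding carrier_vec_def carrier_mat_def by simp
    show ?thesis unfolding cscal[OF x c] using M y
      by (auto simp: row_sprod[of _ m n] intro!: sum.cong)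
  qed
  finally show ?thesis .
qed

lemma adj_mult:
  assumes A: "A \<in> carrier_mat n m" and B: "B \<in> carrier_mat m k"
  shows "adj (A * B) = adj B * adj A"
proof (rule eq_matI)
  fix i j assume i: "i < dim_row (adj B * adj A)" and j: "j < dim_col (adj B * adj A)"
  hence i': "i < k" and j': "j < n" using A B by auto
  have "adj (A * B) $$ (i,j) = cnj (\<Sum>l<m. A $$ (j,l) * B $$ (l,i))"
    using A B i' j' by (simp add: index_mult_mat scalar_prod_def row_def col_def lessThan_atLeast0)
  also have "\<dots> = (adj B * adj A) $$ (i,j)"
    using A B i' j' by (simp add: index_mult_mat scalar_prod_def row_def col_def lessThan_atLeast0 mult.commute)
  finally show "adj (A * B) $$ (i, j) = (adj B * adj A) $$ (i, j)" .
qed (insert A B, auto)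

lemma quad_form: "(A::complex mat) \<in> carrier_mat n n \<Longrightarrow> v \<in> carrier_vec n \<Longrightarrow>
  (A *\<^sub>v v) \<bullet>c v = (\<Sum>k<n. \<Sum>l<n. A $$ (k,l) * v $ l * cnj (v $ k))"
  by (simp add: cscal[of _ n] row_sprod[of _ n n] sum_distrib_right)

lemma sum_delta_mult: "i < (n::nat) \<Longrightarrow> (\<Sum>l<n. f l * (if l = i then a else 0)) = f i * (a::complex)"
proof -
  assume i: "i < n"
  have "(\<Sum>l<n. f l * (if l = i then a else 0)) = (\<Sum>l<n. if l = i then f l * a else 0)"
    by (rule sum.cong, auto)
  also have "\<dots> = f i * a" using i by (subst sum.delta[OF finite_lessThan]) auto
  finally show ?thesis .
qed

lemma sum_delta_mult': "i < (n::nat) \<Longrightarrow> (\<Sum>l<n. (if l = i then a else 0) * f l) = (a::complex) * f i"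
  using sum_delta_mult[of i n f a] by (simp add: mult.commute)

lemma quad_two:
  fixes A :: "complex mat" and a b :: complex
  assumes A: "A \<in> carrier_mat n n" and ij: "i < n" "j < n" "i \<noteq> j"
  shows "(A *\<^sub>v vec n (\<lambda>k. (if k = i then a else 0) + (if k = j then b else 0))) \<bullet>c
          vec n (\<lambda>k. (if k = i then a else 0) + (if k = j then b else 0))
      = A $$ (i,i) * a * cnj a + A $$ (i,j) * b * cnj a + A $$ (j,i) * a * cnj b + A $$ (j,j) * b * cnj b"
proof -
  let ?g = "\<lambda>k. (if k = i then a else 0) + (if k = j then b else 0)"
  have "(A *\<^sub>v vec n ?g) \<bullet>c vec n ?g = (\<Sum>k<n. \<Sum>l<n. A $$ (k,l) * ?g l * cnj (?g k))"
    by (rule trans[OF quad_form[OF A]], auto intro!: sum.cong)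
  also have "\<dots> = (\<Sum>k<n. (A $$ (k,i) * a + A $$ (k,j) * b) * cnj (?g k))"
  proof (rule sum.cong[OF refl])
    fix k
    have "(\<Sum>l<n. A $$ (k,l) * ?g l * cnj (?g k)) = (\<Sum>l<n. A $$ (k,l) * ?g l) * cnj (?g k)"
      by (simp add: sum_distrib_right)
    also have "(\<Sum>l<n. A $$ (k,l) * ?g l) = A $$ (k,i) * a + A $$ (k,j) * b"
      by (simp add: distrib_left sum.distrib sum_delta_mult ij)
    finally show "(\<Sum>l<n. A $$ (k,l) * ?g l * cnj (?g k)) = (A $$ (k,i) * a + A $$ (k,j) * b) * cnj (?g k)" .
  qed
  also have "\<dots> = (\<Sum>k<n. (A $$ (k,i) * a + A $$ (k,j) * b) * ((if k = i then cnj a else 0) + (if k = j then cnj b else 0)))"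
    by (rule sum.cong, auto)
  also have "\<dots> = (A $$ (i,i) * a + A $$ (i,j) * b) * cnj a + (A $$ (j,i) * a + A $$ (j,j) * b) * cnj b"
    by (simp only: distrib_left sum.distrib sum_delta_mult ij)
  also have "\<dots> = A $$ (i,i) * a * cnj a + A $$ (i,j) * b * cnj a + A $$ (j,i) * a * cnj b + A $$ (j,j) * b * cnj b"
    by (simp add: algebra_simps)
  finally show ?thesis .
qed

lemma quad_one:
  fixes A :: "complex mat"
  assumes A: "A \<in> carrier_mat n n" and i: "i < n"
  shows "(A *\<^sub>v vec n (\<lambda>k. if k = i then 1 else 0)) \<bullet>c vec n (\<lambda>k. if k = i then 1 else 0) = A $$ (i,i)"
proof -
  let ?g = "\<lambda>k. if k = i then 1 else (0::complex)"
  have "(A *\<^sub>v vec n ?g) \<bullet>c vec n ?g = (\<Sum>k<n. \<Sum>l<n. A $$ (k,l) * ?g l * cnj (?g k))"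
    by (rule trans[OF quad_form[OF A]], auto intro!: sum.cong)
  also have "\<dots> = (\<Sum>k<n. A $$ (k,i) * (if k = i then 1 else 0))"
  proof (rule sum.cong[OF refl])
    fix k
    have "(\<Sum>l<n. A $$ (k,l) * ?g l * cnj (?g k)) = (\<Sum>l<n. A $$ (k,l) * ?g l) * cnj (?g k)"
      by (simp add: sum_distrib_right)
    also have "\<dots> = A $$ (k,i) * (if k = i then 1 else 0)"
      using sum_delta_mult[OF i, of "\<lambda>l. A $$ (k,l)" 1] by auto
    finally show "(\<Sum>l<n. A $$ (k,l) * ?g l * cnj (?g k)) = A $$ (k,i) * (if k = i then 1 else 0)" .
  qed
  also have "\<dots> = A $$ (i,i)" using sum_delta_mult[OF i, of "\<lambda>k. A $$ (k,i)" 1] by simp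
  finally show ?thesis .
qed

lemma psd_carrier: "psd A \<Longrightarrow> A \<in> carrier_mat (dim_row A) (dim_row A)"
  unfolding psd_def by auto

lemma psdD: "psd A \<Longrightarrow> A \<in> carrier_mat n n \<Longrightarrow> v \<in> carrier_vec n \<Longrightarrow>
   Im ((A *\<^sub>v v) \<bullet>c v) = 0 \<and> 0 \<le> Re ((A *\<^sub>v v) \<bullet>c v)"
  unfolding psd_def by auto

lemma psdI: "A \<in> carrier_mat n n \<Longrightarrow> (\<And>v. v \<in> carrier_vec n \<Longrightarrow>
   Im ((A *\<^sub>v v) \<bullet>c v) = 0 \<and> 0 \<le> Re ((A *\<^sub>v v) \<bullet>c v)) \<Longrightarrow> psd A"
  unfolding psd_def by auto

lemma psd_herm_entry:
  assumes p: "psd A" and A: "A \<in> carrier_mat n n" and ij: "i < n" "j < n"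
  shows "A $$ (i,j) = cnj (A $$ (j,i))"
proof -
  have diag: "Im (A $$ (k,k)) = 0" if "k < n" for k
    using psdD[OF p A, of "vec n (\<lambda>l. if l = k then 1 else 0)"] quad_one[OF A that] by auto
  show ?thesis
  proof (cases "i = j")
    case True thus ?thesis using diag[OF ij(1)] by (simp add: complex_eq_iff)
  next
    case False
    have 1: "Im (A $$ (i,i) + A $$ (i,j) + A $$ (j,i) + A $$ (j,j)) = 0"
      using psdD[OF p A, of "vec n (\<lambda>k. (if k = i then 1 else 0) + (if k = j then 1 else 0))"]
        quad_two[OF A ij False, of 1 1] by auto
    have 2: "Im (A $$ (i,i) + A $$ (i,j) * \<i> - A $$ (j,i) * \<i> + A $$ (j,j)) = 0"
      using psdD[OF p A, of "vec n (\<lambda>k. (if k = i then 1 else 0) + (if k = j then \<i> else 0))"]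
        quad_two[OF A ij False, of 1 \<i>] by auto
    show ?thesis using 1 2 diag[OF ij(1)] diag[OF ij(2)] by (simp add: complex_eq_iff)
  qed
qed

lemma psd_adj: assumes p: "psd A" and A: "A \<in> carrier_mat n n" shows "adj A = A"
proof (rule eq_matI)
  fix i j assume "i < dim_row A" "j < dim_col A"
  hence ij: "i < n" "j < n" using A by auto
  show "adj A $$ (i, j) = A $$ (i, j)"
    using A ij psd_herm_entry[OF p A ij(2) ij(1)] by simp
qed (insert A, auto)

lemma cs_add_left: "v \<in> carrier_vec n \<Longrightarrow> u \<in> carrier_vec n \<Longrightarrow> w \<in> carrier_vec n \<Longrightarrow>
  (v + u) \<bullet>c w = v \<bullet>c w + u \<bullet>c (w :: complex vec)"
  by (simp add: cscal[of _ n] sum.distrib algebra_simps)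
lemma cs_add_right: "v \<in> carrier_vec n \<Longrightarrow> u \<in> carrier_vec n \<Longrightarrow> w \<in> carrier_vec n \<Longrightarrow>
  w \<bullet>c (v + u) = w \<bullet>c v + w \<bullet>c (u :: complex vec)"
  by (simp add: cscal[of _ n] sum.distrib algebra_simps)
lemma cs_minus_left: "v \<in> carrier_vec n \<Longrightarrow> u \<in> carrier_vec n \<Longrightarrow> w \<in> carrier_vec n \<Longrightarrow>
  (v - u) \<bullet>c w = v \<bullet>c w - u \<bullet>c (w :: complex vec)"
  by (simp add: cscal[of _ n] sum_subtractf algebra_simps)
lemma cs_minus_right: "v \<in> carrier_vec n \<Longrightarrow> u \<in> carrier_vec n \<Longrightarrow> w \<in> carrier_vec n \<Longrightarrow>
  w \<bullet>c (v - u) = w \<bullet>c v - w \<bullet>c (u :: complex vec)"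
  by (simp add: cscal[of _ n] sum_subtractf algebra_simps)
lemma cs_smult_left: "v \<in> carrier_vec n \<Longrightarrow> w \<in> carrier_vec n \<Longrightarrow>
  (a \<cdot>\<^sub>v v) \<bullet>c w = a * (v \<bullet>c (w :: complex vec))"
  by (simp add: cscal[of _ n] sum_distrib_left algebra_simps)
lemma cs_smult_right: "v \<in> carrier_vec n \<Longrightarrow> w \<in> carrier_vec n \<Longrightarrow>
  w \<bullet>c (a \<cdot>\<^sub>v v) = cnj a * (w \<bullet>c (v :: complex vec))"
  by (simp add: cscal[of _ n] sum_distrib_left algebra_simps)
lemma cs_zero_left: "w \<in> carrier_vec n \<Longrightarrow> 0\<^sub>v n \<bullet>c (w :: complex vec) = 0"
  by (simp add: cscal[of _ n])
lemma cs_zero_right: "w \<in> carrier_vec n \<Longrightarrow> w \<bullet>c (0\<^sub>v n :: complex vec) = 0"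
  by (simp add: cscal[of _ n])
lemma cs_comm: "v \<in> carrier_vec n \<Longrightarrow> w \<in> carrier_vec n \<Longrightarrow> w \<bullet>c v = cnj (v \<bullet>c (w :: complex vec))"
  by (simp add: cscal[of _ n] mult.commute)
lemma cs_self_real: "v \<in> carrier_vec n \<Longrightarrow> Im (v \<bullet>c (v :: complex vec)) = 0 \<and> 0 \<le> Re (v \<bullet>c v)"
  using conjugate_square_ge_0_vec[of v] by (auto simp: less_eq_complex_def)
lemma cs_self_zero: "v \<in> carrier_vec n \<Longrightarrow> Re (v \<bullet>c (v :: complex vec)) = 0 \<Longrightarrow> v = 0\<^sub>v n"
  using cs_self_real[of v n] conjugate_square_eq_0_vec[of v n] by (auto simp: complex_eq_iff)

lemma herm_mult_vec: "adj C = C \<Longrightarrow> C \<in> carrier_mat n n \<Longrightarrow> x \<in> carrier_vec n \<Longrightarrow> y \<in> carrier_vec n \<Longrightarrow>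
  (C *\<^sub>v x) \<bullet>c y = x \<bullet>c (C *\<^sub>v y)"
  using adj_mult_vec[of C n n x y] by simp

lemma psd_sqrt_eigen:
  fixes C :: "complex mat"
  assumes C: "C \<in> carrier_mat n n" and p: "psd C" and v: "v \<in> carrier_vec n"
    and ev: "(C * C) *\<^sub>v v = complex_of_real (l^2) \<cdot>\<^sub>v v" and l: "l \<ge> 0"
  shows "C *\<^sub>v v = complex_of_real l \<cdot>\<^sub>v v"
proof -
  have h: "adj C = C" using psd_adj[OF p C] .
  have CCv: "C *\<^sub>v (C *\<^sub>v v) = complex_of_real (l^2) \<cdot>\<^sub>v v" using ev C v by simp
  have Cv: "C *\<^sub>v v \<in> carrier_vec n" using C v by simp
  show ?thesis
  proof (cases "l = 0")
    case True
    have "(C *\<^sub>v v) \<bullet>c (C *\<^sub>v v) = v \<bullet>c (C *\<^sub>v (C *\<^sub>v v))" using herm_mult_vec[OF h C v Cv] .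
    also have "\<dots> = 0" unfolding CCv True using v by (simp add: cs_smult_right[of _ n])
    finally have "C *\<^sub>v v = 0\<^sub>v n" using cs_self_zero[OF Cv] by simp
    thus ?thesis using True v by auto
  next
    case False
    hence lpos: "l > 0" using l by auto
    define a where "a = complex_of_real l"
    define u where "u = C *\<^sub>v v - a \<cdot>\<^sub>v v"
    have u: "u \<in> carrier_vec n" unfolding u_def using Cv v by simp
    have Cu: "C *\<^sub>v u = complex_of_real (l^2) \<cdot>\<^sub>v v - a \<cdot>\<^sub>v (C *\<^sub>v v)"
      unfolding u_def using C v Cv by (simp add: mult_minus_distrib_mat_vec[of C n n] mult_mat_vec[of C n n] CCv)
    have "C *\<^sub>v u + a \<cdot>\<^sub>v u = complex_of_real (l^2) \<cdot>\<^sub>v v - a \<cdot>\<^sub>v (C *\<^sub>v v) + a \<cdot>\<^sub>v (C *\<^sub>v v - a \<cdot>\<^sub>v v)"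
      unfolding Cu by (simp add: u_def)
    also have "\<dots> = 0\<^sub>v n"
      unfolding a_def using v Cv C by (intro eq_vecI; simp add: power2_eq_square; simp add: algebra_simps)
    finally have "C *\<^sub>v u + a \<cdot>\<^sub>v u = 0\<^sub>v n" .
    hence "(C *\<^sub>v u + a \<cdot>\<^sub>v u) \<bullet>c u = 0" using u by (simp add: cs_zero_left[of _ n])
    hence eq0: "(C *\<^sub>v u) \<bullet>c u + a * (u \<bullet>c u) = 0" 
      using u C by (simp add: cs_add_left[of _ n] cs_smult_left[of _ n])
    have "Re ((C *\<^sub>v u) \<bullet>c u) + l * Re (u \<bullet>c u) = 0"
      using arg_cong[OF eq0, of Re] by (simp add: a_def)
    moreover have "0 \<le> Re ((C *\<^sub>v u) \<bullet>c u)" using psdD[OF p C u] by auto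
    moreover have "0 \<le> Re (u \<bullet>c u)" using cs_self_real[OF u] by auto
    moreover have "0 \<le> l * Re (u \<bullet>c u)" using l cs_self_real[OF u] by simp
    ultimately have "l * Re (u \<bullet>c u) = 0" by linarith
    hence "Re (u \<bullet>c u) = 0" using lpos by simp
    hence "u = 0\<^sub>v n" using cs_self_zero[OF u] by simp
    show ?thesis
    proof (rule eq_vecI)
      fix i assume "i < dim_vec (complex_of_real l \<cdot>\<^sub>v v)"
      hence i: "i < n" using v by simp
      have "u $ i = 0" using \<open>u = 0\<^sub>v n\<close> i by simp
      thus "(C *\<^sub>v v) $ i = (complex_of_real l \<cdot>\<^sub>v v) $ i"
        unfolding u_def a_def using i v Cv by simp
    qed (insert Cv v C, simp)
  qed
qed

definition onb :: "nat \<Rightarrow> complex vec list \<Rightarrow> bool" where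
  "onb n ws \<longleftrightarrow> length ws = n \<and> set ws \<subseteq> carrier_vec n \<and>
     (\<forall>i<n. \<forall>j<n. ws!i \<bullet>c ws!j = (if i = j then 1 else 0))"

definition nrm :: "complex vec \<Rightarrow> complex vec" where
  "nrm w = complex_of_real (1 / sqrt (Re (w \<bullet>c w))) \<cdot>\<^sub>v w"

lemma nrm_carrier[simp]: "w \<in> carrier_vec n \<Longrightarrow> nrm w \<in> carrier_vec n"
  unfolding nrm_def by simp

lemma nrm_cs: assumes w: "w \<in> carrier_vec n" and u: "u \<in> carrier_vec n"
  shows "nrm w \<bullet>c nrm u = complex_of_real (1 / sqrt (Re (w \<bullet>c w))) * complex_of_real (1 / sqrt (Re (u \<bullet>c u))) * (w \<bullet>c u)"
  unfolding nrm_def using w u by (simp add: cs_smult_left[of _ n] cs_smult_right[of _ n])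

lemma nrm_self: assumes w: "w \<in> carrier_vec n" and nz: "w \<bullet>c w \<noteq> 0"
  shows "nrm w \<bullet>c nrm w = 1"
proof -
  have r: "Im (w \<bullet>c w) = 0" "Re (w \<bullet>c w) \<ge> 0" using cs_self_real[OF w] by auto
  hence pos: "Re (w \<bullet>c w) > 0" using nz by (metis complex_eq_iff less_eq_real_def zero_complex.simps)
  have e: "w \<bullet>c w = complex_of_real (Re (w \<bullet>c w))" using r by (simp add: complex_eq_iff)
  define r where "r = Re (w \<bullet>c w)"
  have rp: "r > 0" using pos unfolding r_def .
  have s: "sqrt r * sqrt r = r" using rp by simp
  have "(1 / sqrt r) * (1 / sqrt r) * r = r / (sqrt r * sqrt r)" by simp
  also have "\<dots> = 1" using s rp by simp
  finally have "(1 / sqrt r) * (1 / sqrt r) * r = 1" .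
  hence "complex_of_real ((1 / sqrt r) * (1 / sqrt r) * r) = 1" by simp
  thus ?thesis unfolding nrm_cs[OF w w] apply (subst (3) e) unfolding r_def[symmetric] of_real_mult[symmetric] by simp
qed

lemma onb_completion:
  assumes v: "v \<in> carrier_vec n" and v1: "v \<bullet>c v = 1"
  shows "\<exists>ws. onb n ws \<and> ws ! 0 = v"
proof -
  interpret cof_vec_space n "TYPE(complex)" .
  have v0: "v \<noteq> 0\<^sub>v n" using v1 v by (auto simp: cs_zero_left[of _ n])
  have n: "n > 0" using v v1 by (cases n, auto simp: cscal[of _ 0])
  define b where "b = basis_completion v"
  from basis_completion[OF v v0, folded b_def]
  have dist_b: "distinct b" and indep: "\<not> lin_dep (set b)" and b: "set b \<subseteq> carrier_vec n"
    and hdb: "hd b = v" and len_b: "length b = n" by auto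
  from hdb len_b n obtain vs where bv: "b = v # vs" by (cases b, auto)
  define ws0 where "ws0 = gram_schmidt n b"
  from gram_schmidt_result[OF b dist_b indep ws0_def]
  have orth: "corthogonal ws0" and ws0c: "set ws0 \<subseteq> carrier_vec n" and len0: "length ws0 = n"
    using len_b by auto
  have hd0: "hd ws0 = v" unfolding ws0_def bv using gram_schmidt_hd[OF v] .
  hence ws00: "ws0 ! 0 = v" using len0 n by (cases ws0, auto)
  define ws where "ws = map nrm ws0"
  have c: "ws0 ! i \<in> carrier_vec n" if "i < n" for i using ws0c that len0 by auto
  have nz: "ws0 ! i \<bullet>c ws0 ! i \<noteq> 0" if "i < n" for i using corthogonalD[OF orth, of i i] that len0 by auto
  have "onb n ws" unfolding onb_def
  proof (intro conjI allI impI)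
    show "length ws = n" unfolding ws_def using len0 by simp
    show "set ws \<subseteq> carrier_vec n" unfolding ws_def using ws0c by auto
    fix i j assume i: "i < n" and j: "j < n"
    show "ws ! i \<bullet>c ws ! j = (if i = j then 1 else 0)"
    proof (cases "i = j")
      case True thus ?thesis unfolding ws_def using i len0 nrm_self[OF c nz] by simp
    next
      case False
      hence "ws0 ! i \<bullet>c ws0 ! j = 0" using corthogonalD[OF orth, of i j] i j len0 by auto
      thus ?thesis unfolding ws_def using i j len0 False nrm_cs[OF c[OF i] c[OF j]] by simp
    qed
  qed
  moreover have "ws ! 0 = v" unfolding ws_def using ws00 len0 n v1 by (simp add: nrm_def)
  ultimately show ?thesis by blast
qed

lemma onb_unitary:
  assumes o: "onb n ws"
  defines "W \<equiv> mat_of_cols n ws"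
  shows "W \<in> carrier_mat n n" "adj W * W = 1\<^sub>m n" "W * adj W = 1\<^sub>m n"
proof -
  have len: "length ws = n" and wc: "set ws \<subseteq> carrier_vec n"
    and orth: "\<And>i j. i < n \<Longrightarrow> j < n \<Longrightarrow> ws!i \<bullet>c ws!j = (if i = j then 1 else 0)"
    using o unfolding onb_def by auto
  show W: "W \<in> carrier_mat n n" unfolding W_def using mat_of_cols_carrier(1)[of n ws] len by simp
  show AW: "adj W * W = 1\<^sub>m n"
  proof (rule eq_matI)
    fix i j assume "i < dim_row (1\<^sub>m n)" "j < dim_col (1\<^sub>m n)"
    hence i: "i < n" and j: "j < n" by auto
    have ci: "ws ! i \<in> carrier_vec n" and cj: "ws ! j \<in> carrier_vec n" using wc len i j by auto
    have "(adj W * W) $$ (i,j) = (\<Sum>k<n. cnj (W $$ (k,i)) * W $$ (k,j))"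
      using W i j by (simp add: row_sprod[of _ n n] )
    also have "\<dots> = (\<Sum>k<n. ws ! j $ k * cnj (ws ! i $ k))"
      unfolding W_def using i j len by (auto simp: mat_of_cols_def mult.commute intro!: sum.cong)
    also have "\<dots> = ws ! j \<bullet>c ws ! i" using cscal[OF cj ci] by simp
    also have "\<dots> = 1\<^sub>m n $$ (i,j)" using orth[OF j i] i j by auto
    finally show "(adj W * W) $$ (i,j) = 1\<^sub>m n $$ (i,j)" .
  qed (insert W, auto)
  show "W * adj W = 1\<^sub>m n" using mat_mult_left_right_inverse[OF _ W AW] W by simp
qed

lemma unitary_cs:
  assumes W: "W \<in> carrier_mat n n" and u: "adj W * W = 1\<^sub>m n"
    and x: "x \<in> carrier_vec n" and y: "y \<in> carrier_vec n"
  shows "(W *\<^sub>v x) \<bullet>c (W *\<^sub>v y) = x \<bullet>c y"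
proof -
  have "(W *\<^sub>v x) \<bullet>c (W *\<^sub>v y) = x \<bullet>c (adj W *\<^sub>v (W *\<^sub>v y))"
    using adj_mult_vec[OF W x] y W by simp
  also have "adj W *\<^sub>v (W *\<^sub>v y) = (adj W * W) *\<^sub>v y" using W y by (simp add: assoc_mult_mat_vec[of _ n n _ n])
  finally show ?thesis using u y by simp
qed

lemma unitary_eigen:
  assumes W: "W \<in> carrier_mat n n" and u: "W * adj W = 1\<^sub>m n" and A: "A \<in> carrier_mat n n"
    and y: "y \<in> carrier_vec n" and ev: "(adj W * A * W) *\<^sub>v y = l \<cdot>\<^sub>v y"
  shows "A *\<^sub>v (W *\<^sub>v y) = l \<cdot>\<^sub>v (W *\<^sub>v y)"
proof -
  have aW: "adj W \<in> carrier_mat n n" using W by simp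
  have "A * W = (W * adj W) * A * W" using u A W by simp
  also have "\<dots> = W * (adj W * A) * W" using assoc_mult_mat[OF W aW A] by simp
  also have "\<dots> = W * (adj W * A * W)" using assoc_mult_mat[OF W _ W, of "adj W * A"] aW A by simp
  finally have e: "A * W = W * (adj W * A * W)" .
  have c: "adj W * A * W \<in> carrier_mat n n" using aW A W by auto
  have "A *\<^sub>v (W *\<^sub>v y) = (A * W) *\<^sub>v y" using A W y by simp
  also have "(A * W) *\<^sub>v y = W *\<^sub>v ((adj W * A * W) *\<^sub>v y)" unfolding e 
    by (rule assoc_mult_mat_vec[OF W c y])
  also have "\<dots> = l \<cdot>\<^sub>v (W *\<^sub>v y)" unfolding ev using W y by (simp add: mult_mat_vec[of _ n n])
  finally show ?thesis .
qed

definition eigbasis :: "complex mat \<Rightarrow> nat \<Rightarrow> complex vec list \<Rightarrow> bool" where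
  "eigbasis A n us \<longleftrightarrow> onb n us \<and> (\<forall>i<n. \<exists>l. A *\<^sub>v us!i = l \<cdot>\<^sub>v us!i)"

lemma vCons_cs: "x \<in> carrier_vec m \<Longrightarrow> y \<in> carrier_vec m \<Longrightarrow>
  vCons a x \<bullet>c vCons b y = a * cnj b + x \<bullet>c (y :: complex vec)"
  by (simp add: cscal[of _ "Suc m"] cscal[of _ m] sum.lessThan_Suc_shift)

lemma adjmat_entry:
  assumes W: "W \<in> carrier_mat n n" and A: "A \<in> carrier_mat n n" and ij: "i < n" "j < n"
  shows "(adj W * A * W) $$ (i,j) = (A *\<^sub>v col W j) \<bullet>c col W i"
proof -
  have "(adj W * A * W) $$ (i,j) = (adj W * (A * W)) $$ (i,j)"
    using assoc_mult_mat[of "adj W" n n A n W n] W A by simp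
  also have "\<dots> = row (adj W) i \<bullet> col (A * W) j" using W A ij by simp
  also have "col (A * W) j = A *\<^sub>v col W j" by (rule col_mult2[OF A W ij(2)])
  also have "row (adj W) i \<bullet> (A *\<^sub>v col W j) = (A *\<^sub>v col W j) \<bullet>c col W i"
    using W A ij by (simp add: scalar_prod_def mult.commute)
  finally show ?thesis .
qed

lemma herm_eigbasis:
  assumes "A \<in> carrier_mat n n" "adj A = A"
  shows "\<exists>us. eigbasis A n us"
  using assms
proof (induction n arbitrary: A)
  case 0
  show ?case by (rule exI[of _ "[]"], auto simp: eigbasis_def onb_def)
next
  case (Suc m A)
  let ?n = "Suc m"
  have A: "A \<in> carrier_mat ?n ?n" and hA: "adj A = A" using Suc.prems by auto
  obtain as where cp: "char_poly A = (\<Prod>a\<leftarrow>as. [:- a, 1:])" and las: "length as = ?n"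
    using char_poly_factorized[OF A] by blast
  then obtain e rest where as: "as = e # rest" by (cases as, auto)
  have "poly (char_poly A) e = 0" unfolding cp as by simp
  hence "eigenvalue A e" using eigenvalue_root_char_poly[OF A] by simp
  from find_eigenvector[OF A this] obtain v where "eigenvector A v e" by blast
  hence v: "v \<in> carrier_vec ?n" and v0: "v \<noteq> 0\<^sub>v ?n" and Av: "A *\<^sub>v v = e \<cdot>\<^sub>v v"
    using A unfolding eigenvector_def by auto
  define v1 where "v1 = nrm v"
  have vv: "v \<bullet>c v \<noteq> 0" using conjugate_square_eq_0_vec[OF v] v0 by simp
  have v1: "v1 \<in> carrier_vec ?n" "v1 \<bullet>c v1 = 1" unfolding v1_def using v nrm_self[OF v vv] by auto
  have Av1: "A *\<^sub>v v1 = e \<cdot>\<^sub>v v1" unfolding v1_def nrm_def using A v Av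
    by (simp add: mult_mat_vec[of _ ?n ?n] smult_smult_assoc mult.commute)
  obtain ws where ws: "onb ?n ws" and ws0: "ws ! 0 = v1" using onb_completion[OF v1] by blast
  define W where "W = mat_of_cols ?n ws"
  note U = onb_unitary[OF ws, folded W_def]
  have W: "W \<in> carrier_mat ?n ?n" using U by simp
  have lws: "length ws = ?n" and wsc: "\<And>i. i < ?n \<Longrightarrow> ws ! i \<in> carrier_vec ?n"
    and orth: "\<And>i j. i < ?n \<Longrightarrow> j < ?n \<Longrightarrow> ws!i \<bullet>c ws!j = (if i = j then 1 else 0)"
    using ws unfolding onb_def by auto
  have colW: "col W i = ws ! i" if "i < ?n" for i unfolding W_def using that lws wsc[OF that] by simp
  define A' where "A' = adj W * A * W"
  have A'c: "A' \<in> carrier_mat ?n ?n" unfolding A'_def using W A by auto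
  have ent: "A' $$ (i,j) = (A *\<^sub>v ws ! j) \<bullet>c ws ! i" if "i < ?n" "j < ?n" for i j
    unfolding A'_def using adjmat_entry[OF W A that] colW that by simp
  have herm': "A' $$ (i,j) = cnj (A' $$ (j,i))" if ij: "i < ?n" "j < ?n" for i j
  proof -
    have "A' $$ (i,j) = ws ! j \<bullet>c (A *\<^sub>v ws ! i)" using ent[OF ij] herm_mult_vec[OF hA A wsc wsc] ij by simp
    also have "\<dots> = cnj ((A *\<^sub>v ws ! i) \<bullet>c ws ! j)" using cs_comm[of "A *\<^sub>v ws ! i" ?n "ws ! j"] A wsc ij by simp
    finally show ?thesis using ent[OF ij(2,1)] by simp
  qed
  have col0: "A' $$ (i,0) = (if i = 0 then e else 0)" if "i < ?n" for i
    using ent[OF that, of 0] ws0 Av1 orth[of 0 i] that v1 wsc[OF that]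
    by (simp add: cs_smult_left[of _ ?n])
  have row0: "A' $$ (0,j) = 0" if "j < ?n" "j \<noteq> 0" for j
    using herm'[of 0 j] col0[of j] that by simp
  define A3 where "A3 = mat m m (\<lambda>(i,j). A' $$ (Suc i, Suc j))"
  have A3: "A3 \<in> carrier_mat m m" unfolding A3_def by simp
  have hA3: "adj A3 = A3"
  proof (rule eq_matI)
    fix i j assume "i < dim_row A3" "j < dim_col A3"
    hence ij: "i < m" "j < m" using A3 by auto
    show "adj A3 $$ (i,j) = A3 $$ (i,j)" using A3 ij herm'[of "Suc j" "Suc i"] by (simp add: A3_def)
  qed (insert A3, auto)
  obtain us3 where us3: "eigbasis A3 m us3" using Suc.IH[OF A3 hA3] by blast
  have l3: "length us3 = m" and u3c: "\<And>i. i < m \<Longrightarrow> us3 ! i \<in> carrier_vec m"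
    and orth3: "\<And>i j. i < m \<Longrightarrow> j < m \<Longrightarrow> us3!i \<bullet>c us3!j = (if i = j then 1 else 0)"
    and ev3: "\<And>i. i < m \<Longrightarrow> \<exists>l. A3 *\<^sub>v us3!i = l \<cdot>\<^sub>v us3!i"
    using us3 unfolding eigbasis_def onb_def by auto
  define ys where "ys = vCons 1 (0\<^sub>v m) # map (vCons 0) us3"
  have lys: "length ys = ?n" unfolding ys_def using l3 by simp
  have ys0: "ys ! 0 = vCons 1 (0\<^sub>v m)" unfolding ys_def by simp
  have ysS: "ys ! Suc i = vCons 0 (us3 ! i)" if "i < m" for i unfolding ys_def using that l3 by simp
  have ysc: "ys ! i \<in> carrier_vec ?n" if "i < ?n" for i
    using that u3c ys0 ysS by (cases i, auto)
  have ysorth: "ys!i \<bullet>c ys!j = (if i = j then 1 else 0)" if "i < ?n" "j < ?n" for i j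
  proof (cases i)
    case 0 note i = this
    show ?thesis
    proof (cases j)
      case 0 thus ?thesis using i ys0 by (simp add: vCons_cs[of _ m] cs_zero_left[of _ m])
    next
      case (Suc j') thus ?thesis using i ys0 ysS[of j'] that u3c[of j'] by (simp add: vCons_cs[of _ m] cs_zero_left[of _ m])
    qed
  next
    case (Suc i') note i = this
    show ?thesis
    proof (cases j)
      case 0 thus ?thesis using i ys0 ysS[of i'] that u3c[of i'] by (simp add: vCons_cs[of _ m] cs_zero_right[of _ m])
    next
      case (Suc j') thus ?thesis using i ysS[of i'] ysS[of j'] that u3c[of i'] u3c[of j'] orth3[of i' j']
        by (simp add: vCons_cs[of _ m])
    qed
  qed
  have A'vCons: "A' *\<^sub>v vCons 0 x = vCons 0 (A3 *\<^sub>v x)" if x: "x \<in> carrier_vec m" for x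
  proof (rule eq_vecI)
    show "dim_vec (A' *\<^sub>v vCons 0 x) = dim_vec (vCons 0 (A3 *\<^sub>v x))" using A'c A3 by simp
    fix k assume "k < dim_vec (vCons 0 (A3 *\<^sub>v x))"
    hence k: "k < ?n" using A3 by simp
    have xc: "vCons 0 x \<in> carrier_vec ?n" using x by simp
    have "(A' *\<^sub>v vCons 0 x) $ k = (\<Sum>j<?n. A' $$ (k,j) * vCons 0 x $ j)"
      using A'c xc k by (simp add: row_sprod[of _ ?n ?n])
    also have "\<dots> = (\<Sum>j<m. A' $$ (k, Suc j) * x $ j)" by (subst sum.lessThan_Suc_shift, simp)
    also have "\<dots> = vCons 0 (A3 *\<^sub>v x) $ k"
    proof (cases k)
      case 0 thus ?thesis using row0 by simp
    next
      case (Suc k')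
      hence k': "k' < m" using k by simp
      have "(A3 *\<^sub>v x) $ k' = (\<Sum>j<m. A3 $$ (k',j) * x $ j)" using A3 x k' by (simp add: row_sprod[OF A3 x])
      also have "\<dots> = (\<Sum>j<m. A' $$ (k, Suc j) * x $ j)" using Suc k' by (simp add: A3_def)
      finally show ?thesis using Suc by simp
    qed
    finally show "(A' *\<^sub>v vCons 0 x) $ k = vCons 0 (A3 *\<^sub>v x) $ k" .
  qed
  have A'e0: "A' *\<^sub>v vCons 1 (0\<^sub>v m) = e \<cdot>\<^sub>v vCons 1 (0\<^sub>v m)"
  proof (rule eq_vecI)
    show "dim_vec (A' *\<^sub>v vCons 1 (0\<^sub>v m)) = dim_vec (e \<cdot>\<^sub>v vCons 1 (0\<^sub>v m))" using A'c by simp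
    fix k assume "k < dim_vec (e \<cdot>\<^sub>v vCons 1 (0\<^sub>v m))"
    hence k: "k < ?n" by simp
    have xc: "vCons 1 (0\<^sub>v m) \<in> carrier_vec ?n" by simp
    have "(A' *\<^sub>v vCons 1 (0\<^sub>v m)) $ k = (\<Sum>j<?n. A' $$ (k,j) * vCons 1 (0\<^sub>v m) $ j)"
      using A'c xc k by (simp add: row_sprod[of _ ?n ?n])
    also have "\<dots> = A' $$ (k,0)" by (subst sum.lessThan_Suc_shift, simp)
    also have "\<dots> = (e \<cdot>\<^sub>v vCons 1 (0\<^sub>v m)) $ k" using col0[OF k] k by (cases k, auto)
    finally show "(A' *\<^sub>v vCons 1 (0\<^sub>v m)) $ k = (e \<cdot>\<^sub>v vCons 1 (0\<^sub>v m)) $ k" .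
  qed
  have ysev: "\<exists>l. A' *\<^sub>v ys!i = l \<cdot>\<^sub>v ys!i" if i: "i < ?n" for i
  proof (cases i)
    case 0 thus ?thesis using A'e0 ys0 by auto
  next
    case (Suc i')
    hence i': "i' < m" using i by simp
    obtain l where l: "A3 *\<^sub>v us3!i' = l \<cdot>\<^sub>v us3!i'" using ev3[OF i'] by blast
    have "A' *\<^sub>v ys!i = vCons 0 (l \<cdot>\<^sub>v us3!i')" using Suc ysS[OF i'] A'vCons[OF u3c[OF i']] l by simp
    also have "\<dots> = l \<cdot>\<^sub>v ys!i" using Suc ysS[OF i'] by (intro eq_vecI, auto simp: vec_index_vCons)
    finally show ?thesis by blast
  qed
  define us where "us = map (\<lambda>y. W *\<^sub>v y) ys"
  have "eigbasis A ?n us" unfolding eigbasis_def onb_def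
  proof (intro conjI allI impI)
    show "length us = ?n" unfolding us_def using lys by simp
    show "set us \<subseteq> carrier_vec ?n" unfolding us_def
    proof
      fix x assume "x \<in> set (map (\<lambda>y. W *\<^sub>v y) ys)"
      then obtain y where "x = W *\<^sub>v y" by auto
      thus "x \<in> carrier_vec ?n" using W unfolding carrier_vec_def by simp
    qed
    fix i j assume i: "i < ?n" and j: "j < ?n"
    have ui: "us ! i = W *\<^sub>v ys ! i" unfolding us_def using i lys by simp
    have uj: "us ! j = W *\<^sub>v ys ! j" unfolding us_def using j lys by simp
    show "us!i \<bullet>c us!j = (if i = j then 1 else 0)" unfolding ui uj
      unfolding unitary_cs[OF W U(2) ysc[OF i] ysc[OF j]] by (rule ysorth[OF i j])
  next
    fix i assume i: "i < ?n"
    obtain l where l: "A' *\<^sub>v ys!i = l \<cdot>\<^sub>v ys!i" using ysev[OF i] by blast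
    have ui: "us ! i = W *\<^sub>v ys ! i" unfolding us_def using i lys by simp
    have "A *\<^sub>v us ! i = l \<cdot>\<^sub>v us ! i" unfolding ui
      by (rule unitary_eigen[OF W U(3) A ysc[OF i]], fold A'_def, rule l)
    thus "\<exists>l. A *\<^sub>v us ! i = l \<cdot>\<^sub>v us ! i" by blast
  qed
  thus ?case by blast
qed

lemma eig_real:
  fixes A :: "complex mat"
  assumes A: "A \<in> carrier_mat n n" and u: "u \<in> carrier_vec n" and uu: "u \<bullet>c u = 1"
    and ev: "A *\<^sub>v u = l \<cdot>\<^sub>v u" and q: "Im ((A *\<^sub>v u) \<bullet>c u) = 0" "0 \<le> Re ((A *\<^sub>v u) \<bullet>c u)"
  shows "l = complex_of_real (sqrt (Re l) ^ 2)" "0 \<le> Re l"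
proof -
  have "(A *\<^sub>v u) \<bullet>c u = l" unfolding ev using u uu by (simp add: cs_smult_left[of _ n])
  hence "Im l = 0" "0 \<le> Re l" using q by auto
  thus "l = complex_of_real (sqrt (Re l) ^ 2)" "0 \<le> Re l" by (auto simp: complex_eq_iff)
qed

lemma mat_of_cols_index: "i < n \<Longrightarrow> j < length us \<Longrightarrow> mat_of_cols n us $$ (i,j) = us ! j $ i"
  unfolding mat_of_cols_def by simp

lemma mult_col_entry:
  assumes B: "B \<in> carrier_mat n n" and U: "U \<in> carrier_mat n n" and ij: "i < n" "j < n"
  shows "(B * U) $$ (i,j) = (B *\<^sub>v col U j) $ i"
  using B U ij by simp

lemma psd_sqrt_unique:
  fixes B C :: "complex mat"
  assumes B: "B \<in> carrier_mat n n" and C: "C \<in> carrier_mat n n" and pB: "psd B" and pC: "psd C"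
    and eq: "B * B = C * C"
  shows "B = C"
proof -
  define A where "A = B * B"
  have Ac: "A \<in> carrier_mat n n" unfolding A_def using B by simp
  have hB: "adj B = B" using psd_adj[OF pB B] .
  have hA: "adj A = A" unfolding A_def using adj_mult[OF B B] hB by simp
  obtain us where us: "eigbasis A n us" using herm_eigbasis[OF Ac hA] by blast
  have lus: "length us = n" and usc: "\<And>i. i < n \<Longrightarrow> us ! i \<in> carrier_vec n"
    and orth: "\<And>i j. i < n \<Longrightarrow> j < n \<Longrightarrow> us!i \<bullet>c us!j = (if i = j then 1 else 0)"
    and ev: "\<And>i. i < n \<Longrightarrow> \<exists>l. A *\<^sub>v us!i = l \<cdot>\<^sub>v us!i"
    using us unfolding eigbasis_def onb_def by auto
  define U where "U = mat_of_cols n us"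
  have U: "U \<in> carrier_mat n n" "U * adj U = 1\<^sub>m n"
    using onb_unitary[of n us] us unfolding eigbasis_def U_def by auto
  have colU: "col U j = us ! j" if "j < n" for j unfolding U_def using that lus usc[OF that] by simp
  have key: "B *\<^sub>v us ! j = C *\<^sub>v us ! j" if j: "j < n" for j
  proof -
    obtain l where l: "A *\<^sub>v us!j = l \<cdot>\<^sub>v us!j" using ev[OF j] by blast
    have uj: "us ! j \<in> carrier_vec n" using usc[OF j] .
    have Bu: "B *\<^sub>v us ! j \<in> carrier_vec n" using B uj by simp
    have "(A *\<^sub>v us!j) \<bullet>c us!j = (B *\<^sub>v us ! j) \<bullet>c (B *\<^sub>v us ! j)"
      unfolding A_def using herm_mult_vec[OF hB B Bu uj] B uj by simp
    hence q: "Im ((A *\<^sub>v us!j) \<bullet>c us!j) = 0" "0 \<le> Re ((A *\<^sub>v us!j) \<bullet>c us!j)"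
      using cs_self_real[OF Bu] by auto
    note er = eig_real[OF Ac uj _ l q] orth[OF j j]
    have lB: "(B * B) *\<^sub>v us!j = complex_of_real (sqrt (Re l) ^ 2) \<cdot>\<^sub>v us!j"
      using l er unfolding A_def by simp
    have lC: "(C * C) *\<^sub>v us!j = complex_of_real (sqrt (Re l) ^ 2) \<cdot>\<^sub>v us!j"
      using lB eq by simp
    show ?thesis using psd_sqrt_eigen[OF B pB uj lB] psd_sqrt_eigen[OF C pC uj lC] er by simp
  qed
  have BU: "B * U = C * U"
  proof (rule eq_matI)
    fix i j assume "i < dim_row (C * U)" "j < dim_col (C * U)"
    hence ij: "i < n" "j < n" using C U by auto
    show "(B * U) $$ (i,j) = (C * U) $$ (i,j)"
      using mult_col_entry[OF B U(1) ij] mult_col_entry[OF C U(1) ij] key[OF ij(2)] colU[OF ij(2)] by simp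
  qed (insert B C U, auto)
  have "B = B * (U * adj U)" using U B by simp
  also have "\<dots> = (B * U) * adj U" using assoc_mult_mat[OF B U(1), of "adj U" n] U by simp
  also have "\<dots> = (C * U) * adj U" unfolding BU ..
  also have "\<dots> = C * (U * adj U)" using assoc_mult_mat[OF C U(1), of "adj U" n] U by simp
  also have "\<dots> = C" using U C by simp
  finally show ?thesis .
qed

lemma diag_cs:
  fixes r :: "nat \<Rightarrow> real"
  assumes w: "w \<in> carrier_vec n" and r: "\<And>i. i < n \<Longrightarrow> r i \<ge> 0"
  defines "D \<equiv> mat n n (\<lambda>(i,j). if i = j then complex_of_real (r i) else 0)"
  shows "Im ((D *\<^sub>v w) \<bullet>c w) = 0 \<and> 0 \<le> Re ((D *\<^sub>v w) \<bullet>c w)"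
proof -
  have Dc: "D \<in> carrier_mat n n" unfolding D_def by simp
  have Dw: "(D *\<^sub>v w) $ i = complex_of_real (r i) * w $ i" if i: "i < n" for i
  proof -
    have "(D *\<^sub>v w) $ i = (\<Sum>j<n. D $$ (i,j) * w $ j)" using Dc w i by (simp add: row_sprod[OF Dc w])
    also have "\<dots> = (\<Sum>j<n. w $ j * (if j = i then complex_of_real (r i) else 0))"
      unfolding D_def using i by (auto intro!: sum.cong)
    also have "\<dots> = w $ i * complex_of_real (r i)" by (rule sum_delta_mult[OF i])
    finally show ?thesis by simp
  qed
  have "(D *\<^sub>v w) \<bullet>c w = (\<Sum>i<n. complex_of_real (r i) * (w $ i * cnj (w $ i)))"
    using Dc w Dw by (simp add: cscal[of _ n] mult.assoc)
  also have "\<dots> = (\<Sum>i<n. complex_of_real (r i * (cmod (w $ i))^2))"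
  proof (rule sum.cong[OF refl])
    fix i
    have "w $ i * cnj (w $ i) = complex_of_real ((cmod (w $ i))^2)" by (rule complex_norm_square[symmetric])
    thus "complex_of_real (r i) * (w $ i * cnj (w $ i)) = complex_of_real (r i * (cmod (w $ i))^2)"
      by simp
  qed
  also have "\<dots> = complex_of_real (\<Sum>i<n. r i * (cmod (w $ i))^2)" by simp
  finally show ?thesis using r by (auto intro!: sum_nonneg)
qed

lemma psd_sqrt_exists:
  fixes A :: "complex mat"
  assumes A: "A \<in> carrier_mat n n" and pA: "psd A"
  shows "\<exists>B. B \<in> carrier_mat n n \<and> psd B \<and> B * B = A"
proof -
  have hA: "adj A = A" using psd_adj[OF pA A] .
  obtain us where us: "eigbasis A n us" using herm_eigbasis[OF A hA] by blast
  have lus: "length us = n" and usc: "\<And>i. i < n \<Longrightarrow> us ! i \<in> carrier_vec n"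
    and orth: "\<And>i j. i < n \<Longrightarrow> j < n \<Longrightarrow> us!i \<bullet>c us!j = (if i = j then 1 else 0)"
    and ev: "\<And>i. i < n \<Longrightarrow> \<exists>l. A *\<^sub>v us!i = l \<cdot>\<^sub>v us!i"
    using us unfolding eigbasis_def onb_def by auto
  define lam where "lam i = (SOME l. A *\<^sub>v us!i = l \<cdot>\<^sub>v us!i)" for i
  have lam: "A *\<^sub>v us!i = lam i \<cdot>\<^sub>v us!i" if "i < n" for i
    unfolding lam_def using someI_ex[OF ev[OF that]] .
  define r where "r i = sqrt (Re (lam i))" for i
  have lr: "lam i = complex_of_real (r i ^ 2)" "r i \<ge> 0" if i: "i < n" for i
    using eig_real[OF A usc[OF i] _ lam[OF i] conjunct1[OF psdD[OF pA A usc[OF i]]] conjunct2[OF psdD[OF pA A usc[OF i]]]]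
      orth[OF i i] unfolding r_def by auto
  define U where "U = mat_of_cols n us"
  have U: "U \<in> carrier_mat n n" "U * adj U = 1\<^sub>m n" "adj U * U = 1\<^sub>m n"
    using onb_unitary[of n us] us unfolding eigbasis_def U_def by auto
  have aU: "adj U \<in> carrier_mat n n" using U by simp
  have Uij: "U $$ (i,j) = us ! j $ i" if "i < n" "j < n" for i j
    unfolding U_def using that lus by (simp add: mat_of_cols_index)
  define D where "D = mat n n (\<lambda>(i,j). if i = j then complex_of_real (r i) else 0)"
  define D2 where "D2 = mat n n (\<lambda>(i,j). if i = j then lam i else 0)"
  have Dc: "D \<in> carrier_mat n n" "D2 \<in> carrier_mat n n" unfolding D_def D2_def by auto
  have DD: "D * D = D2"
  proof (rule eq_matI)
    fix i j assume "i < dim_row D2" "j < dim_col D2"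
    hence ij: "i < n" "j < n" unfolding D2_def by auto
    have "(D * D) $$ (i,j) = (\<Sum>k<n. D $$ (i,k) * D $$ (k,j))"
      using Dc ij by (simp add: row_sprod[of _ n n] )
    also have "\<dots> = (\<Sum>k<n. (if k = i then complex_of_real (r i) else 0) * D $$ (k,j))"
      unfolding D_def using ij by (auto intro!: sum.cong)
    also have "\<dots> = complex_of_real (r i) * D $$ (i,j)" by (rule sum_delta_mult'[OF ij(1)])
    also have "\<dots> = D2 $$ (i,j)" unfolding D_def D2_def using ij lr[OF ij(1)]
      by (cases "i = j", auto simp: power2_eq_square)
    finally show "(D * D) $$ (i,j) = D2 $$ (i,j)" .
  qed (insert Dc, auto simp: D2_def)
  have AU: "A * U = U * D2"
  proof (rule eq_matI)
    fix i j assume "i < dim_row (U * D2)" "j < dim_col (U * D2)"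
    hence ij: "i < n" "j < n" using U Dc by auto
    have "(A * U) $$ (i,j) = (A *\<^sub>v us ! j) $ i"
      using mult_col_entry[OF A U(1) ij] U_def ij lus usc[OF ij(2)] by simp
    also have "\<dots> = lam j * us ! j $ i" using lam[OF ij(2)] usc[OF ij(2)] ij by simp
    also have "\<dots> = (\<Sum>k<n. U $$ (i,k) * D2 $$ (k,j))"
    proof -
      have "(\<Sum>k<n. U $$ (i,k) * D2 $$ (k,j)) = (\<Sum>k<n. U $$ (i,k) * (if k = j then lam j else 0))"
        unfolding D2_def using ij by (auto intro!: sum.cong)
      also have "\<dots> = U $$ (i,j) * lam j" by (rule sum_delta_mult[OF ij(2)])
      finally show ?thesis using Uij[OF ij] by simp
    qed
    also have "\<dots> = (U * D2) $$ (i,j)" using U Dc ij by (simp add: row_sprod[of _ n n])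
    finally show "(A * U) $$ (i,j) = (U * D2) $$ (i,j)" .
  qed (insert A U Dc, auto)
  define B where "B = U * D * adj U"
  have Bc: "B \<in> carrier_mat n n" unfolding B_def using U Dc aU by auto
  define P where "P = U * D"
  have Pc: "P \<in> carrier_mat n n" unfolding P_def using U Dc by auto
  have aUP: "adj U * P = D" unfolding P_def
    using assoc_mult_mat[OF aU U(1) Dc(1)] U Dc by simp
  have "B * B = (P * adj U) * (P * adj U)" unfolding B_def P_def ..
  also have "\<dots> = P * (adj U * (P * adj U))" using assoc_mult_mat[OF Pc aU, of "P * adj U" n] Pc aU by simp
  also have "adj U * (P * adj U) = (adj U * P) * adj U" using assoc_mult_mat[OF aU Pc aU] by simp
  also have "\<dots> = D * adj U" unfolding aUP ..
  also have "P * (D * adj U) = (P * D) * adj U" using assoc_mult_mat[OF Pc Dc(1) aU] by simp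
  also have "P * D = U * D2" unfolding P_def using assoc_mult_mat[OF U(1) Dc(1) Dc(1)] DD by simp
  also have "U * D2 * adj U = A * U * adj U" using AU by simp
  also have "\<dots> = A * (U * adj U)" using assoc_mult_mat[OF A U(1) aU] by simp
  also have "\<dots> = A" using A U by simp
  finally have BB: "B * B = A" .
  have pB: "psd B"
  proof (rule psdI[OF Bc])
    fix v :: "complex vec" assume v: "v \<in> carrier_vec n"
    define w where "w = adj U *\<^sub>v v"
    have w: "w \<in> carrier_vec n" unfolding w_def using aU v by simp
    have Dw: "D *\<^sub>v w \<in> carrier_vec n" using Dc w by simp
    have UD: "U * D \<in> carrier_mat n n" using U Dc by auto
    have "B *\<^sub>v v = (U * D) *\<^sub>v w" unfolding B_def w_def by (rule assoc_mult_mat_vec[OF UD aU v])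
    also have "\<dots> = U *\<^sub>v (D *\<^sub>v w)" by (rule assoc_mult_mat_vec[OF U(1) Dc(1) w])
    finally have Bv: "B *\<^sub>v v = U *\<^sub>v (D *\<^sub>v w)" .
    have "(B *\<^sub>v v) \<bullet>c v = (D *\<^sub>v w) \<bullet>c (adj U *\<^sub>v v)" unfolding Bv by (rule adj_mult_vec[OF U(1) Dw v])
    hence "(B *\<^sub>v v) \<bullet>c v = (D *\<^sub>v w) \<bullet>c w" unfolding w_def[symmetric] .
    moreover have "Im ((D *\<^sub>v w) \<bullet>c w) = 0 \<and> 0 \<le> Re ((D *\<^sub>v w) \<bullet>c w)"
      unfolding D_def by (rule diag_cs[OF w], rule lr(2))
    ultimately show "Im ((B *\<^sub>v v) \<bullet>c v) = 0 \<and> 0 \<le> Re ((B *\<^sub>v v) \<bullet>c v)" by simp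
  qed
  show ?thesis using Bc pB BB by blast
qed

lemma msqrt_props:
  assumes A: "A \<in> carrier_mat n n" and pA: "psd A"
  shows "msqrt A \<in> carrier_mat n n \<and> psd (msqrt A) \<and> msqrt A * msqrt A = A"
proof -
  have d: "dim_row A = n" using A by simp
  obtain B where B: "B \<in> carrier_mat n n" "psd B" "B * B = A" using psd_sqrt_exists[OF A pA] by blast
  have "msqrt A = B" unfolding msqrt_def d
  proof (rule the_equality)
    show "B \<in> carrier_mat n n \<and> psd B \<and> B * B = A" using B by simp
    fix X assume X: "X \<in> carrier_mat n n \<and> psd X \<and> X * X = A"
    show "X = B" using psd_sqrt_unique[of X n B] X B by simp
  qed
  thus ?thesis using B by simp
qed

lemma msqrt_eq:
  assumes B: "B \<in> carrier_mat n n" and pB: "psd B" and BB: "B * B = A"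
  shows "msqrt A = B"
proof -
  have d: "dim_row A = n" using B BB by auto
  show ?thesis unfolding msqrt_def d
  proof (rule the_equality)
    show "B \<in> carrier_mat n n \<and> psd B \<and> B * B = A" using B pB BB by simp
    fix X assume X: "X \<in> carrier_mat n n \<and> psd X \<and> X * X = A"
    show "X = B" using psd_sqrt_unique[of X n B] X B pB BB by simp
  qed
qed

lemma erasure_carrier[simp]: "erasure d \<eta> \<rho> \<in> carrier_mat (d+1) (d+1)"
  unfolding erasure_def by simp
lemma erasure_dims[simp]: "dim_row (erasure d \<eta> \<rho>) = Suc d" "dim_col (erasure d \<eta> \<rho>) = Suc d"
  unfolding erasure_def by simp_all

lemma erasure_index: "i < d+1 \<Longrightarrow> j < d+1 \<Longrightarrow> erasure d \<eta> \<rho> $$ (i,j) =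
   (if i < d \<and> j < d then complex_of_real (1 - \<eta>) * \<rho> $$ (i, j)
     else if i = d \<and> j = d then complex_of_real \<eta> * mtrace \<rho> else 0)"
  unfolding erasure_def by simp

lemma erasure_mv:
  assumes x: "x \<in> carrier_vec (d+1)" and i: "i < d+1"
  shows "(erasure d \<eta> \<rho> *\<^sub>v x) $ i = (if i < d then complex_of_real (1-\<eta>) * (\<Sum>k<d. \<rho> $$ (i,k) * x $ k)
       else complex_of_real \<eta> * mtrace \<rho> * x $ d)"
proof -
  have "(erasure d \<eta> \<rho> *\<^sub>v x) $ i = (\<Sum>k<d+1. erasure d \<eta> \<rho> $$ (i,k) * x $ k)"
    using x i by (rule mult_vec_index_sum[OF erasure_carrier])
  also have "\<dots> = (\<Sum>k<d. erasure d \<eta> \<rho> $$ (i,k) * x $ k) + erasure d \<eta> \<rho> $$ (i,d) * x $ d"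
    by simp
  also have "\<dots> = (if i < d then complex_of_real (1-\<eta>) * (\<Sum>k<d. \<rho> $$ (i,k) * x $ k)
       else complex_of_real \<eta> * mtrace \<rho> * x $ d)"
  proof (cases "i < d")
    case True
    have "(\<Sum>k<d. erasure d \<eta> \<rho> $$ (i,k) * x $ k) = (\<Sum>k<d. complex_of_real (1-\<eta>) * (\<rho> $$ (i,k) * x $ k))"
      using True by (auto simp: erasure_index intro!: sum.cong)
    thus ?thesis using True by (simp add: erasure_index sum_distrib_left)
  next
    case False
    hence id: "i = d" using i by simp
    have "(\<Sum>k<d. erasure d \<eta> \<rho> $$ (i,k) * x $ k) = 0"
      using id by (auto simp: erasure_index intro!: sum.neutral)
    thus ?thesis using id by (simp add: erasure_index)
  qed
  finally show ?thesis .
qed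

definition topv :: "nat \<Rightarrow> complex vec \<Rightarrow> complex vec" where
  "topv d x = vec d (\<lambda>i. x $ i)"

lemma topv_carrier[simp]: "topv d x \<in> carrier_vec d" unfolding topv_def by simp

lemma erasure_quad:
  assumes x: "x \<in> carrier_vec (d+1)" and r: "\<rho> \<in> carrier_mat d d"
  shows "(erasure d \<eta> \<rho> *\<^sub>v x) \<bullet>c x = complex_of_real (1-\<eta>) * ((\<rho> *\<^sub>v topv d x) \<bullet>c topv d x)
      + complex_of_real \<eta> * mtrace \<rho> * (x $ d * cnj (x $ d))"
proof -
  have Ex: "erasure d \<eta> \<rho> *\<^sub>v x \<in> carrier_vec (d+1)" unfolding carrier_vec_def by simp
  have "(erasure d \<eta> \<rho> *\<^sub>v x) \<bullet>c x = (\<Sum>i<d+1. (erasure d \<eta> \<rho> *\<^sub>v x) $ i * cnj (x $ i))"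
    by (rule cscal[OF Ex x])
  also have "\<dots> = (\<Sum>i<d. (erasure d \<eta> \<rho> *\<^sub>v x) $ i * cnj (x $ i)) + (erasure d \<eta> \<rho> *\<^sub>v x) $ d * cnj (x $ d)"
    by simp
  also have "(\<Sum>i<d. (erasure d \<eta> \<rho> *\<^sub>v x) $ i * cnj (x $ i))
     = (\<Sum>i<d. complex_of_real (1-\<eta>) * ((\<Sum>k<d. \<rho> $$ (i,k) * x $ k) * cnj (x $ i)))"
  proof (rule sum.cong[OF refl])
    fix i assume "i \<in> {..<d}"
    hence i: "i < d" and i': "i < d+1" by auto
    show "(erasure d \<eta> \<rho> *\<^sub>v x) $ i * cnj (x $ i) = complex_of_real (1-\<eta>) * ((\<Sum>k<d. \<rho> $$ (i,k) * x $ k) * cnj (x $ i))"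
      unfolding erasure_mv[OF x i'] using i by simp
  qed
  also have "\<dots> = complex_of_real (1-\<eta>) * ((\<rho> *\<^sub>v topv d x) \<bullet>c topv d x)"
    unfolding cscal[OF mult_mat_vec_carrier[OF r topv_carrier] topv_carrier] sum_distrib_left
  proof (rule sum.cong[OF refl])
    fix i assume "i \<in> {..<d}"
    hence i: "i < d" by auto
    have e: "(\<rho> *\<^sub>v topv d x) $ i = (\<Sum>k<d. \<rho> $$ (i,k) * topv d x $ k)"
      by (rule mult_vec_index_sum[OF r topv_carrier i])
    have "(\<Sum>k<d. \<rho> $$ (i,k) * topv d x $ k) = (\<Sum>k<d. \<rho> $$ (i,k) * x $ k)"
      by (rule sum.cong, auto simp: topv_def)
    thus "complex_of_real (1-\<eta>) * ((\<Sum>k<d. \<rho> $$ (i,k) * x $ k) * cnj (x $ i)) =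
      complex_of_real (1-\<eta>) * ((\<rho> *\<^sub>v topv d x) $ i * cnj (topv d x $ i))"
      unfolding e using i by (simp add: topv_def)
  qed
  also have "(erasure d \<eta> \<rho> *\<^sub>v x) $ d * cnj (x $ d) = complex_of_real \<eta> * mtrace \<rho> * (x $ d * cnj (x $ d))"
    unfolding erasure_mv[OF x, of d, OF less_add_one] by simp
  finally show ?thesis .
qed

lemma density_trace: "density d \<rho> \<Longrightarrow> mtrace \<rho> = 1" unfolding density_def by simp
lemma density_carrier: "density d \<rho> \<Longrightarrow> \<rho> \<in> carrier_mat d d" unfolding density_def by simp
lemma density_psd: "density d \<rho> \<Longrightarrow> psd \<rho>" unfolding density_def by simp

lemma erasure_psd:
  assumes r: "density d \<rho>" and eta: "0 \<le> \<eta>" "\<eta> \<le> 1"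
  shows "psd (erasure d \<eta> \<rho>)"
proof (rule psdI[OF erasure_carrier])
  fix x :: "complex vec" assume x: "x \<in> carrier_vec (d+1)"
  have rc: "\<rho> \<in> carrier_mat d d" using density_carrier[OF r] .
  note q = psdD[OF density_psd[OF r] rc topv_carrier[of d x]]
  have xx: "x $ d * cnj (x $ d) = complex_of_real ((cmod (x $ d))^2)" by (rule complex_norm_square[symmetric])
  show "Im ((erasure d \<eta> \<rho> *\<^sub>v x) \<bullet>c x) = 0 \<and> 0 \<le> Re ((erasure d \<eta> \<rho> *\<^sub>v x) \<bullet>c x)"
    unfolding erasure_quad[OF x rc] density_trace[OF r] xx using q eta by simp
qed

lemma alpha_carrier[simp]: "unit_vec (d+1) d \<in> carrier_vec (d+1)" by simp

lemma erasure_alpha: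
  assumes r: "\<rho> \<in> carrier_mat d d"
  shows "erasure d \<eta> \<rho> *\<^sub>v unit_vec (d+1) d = (complex_of_real \<eta> * mtrace \<rho>) \<cdot>\<^sub>v unit_vec (d+1) d"
proof (rule eq_vecI)
  fix i assume "i < dim_vec ((complex_of_real \<eta> * mtrace \<rho>) \<cdot>\<^sub>v unit_vec (d+1) d)"
  hence i: "i < d+1" by simp
  show "(erasure d \<eta> \<rho> *\<^sub>v unit_vec (d+1) d) $ i = ((complex_of_real \<eta> * mtrace \<rho>) \<cdot>\<^sub>v unit_vec (d+1) d) $ i"
    unfolding erasure_mv[OF alpha_carrier i] using i by (auto simp: unit_vec_def intro!: sum.neutral)
qed simp

lemma psd_diag_nonneg:
  assumes T: "T \<in> carrier_mat n n" and p: "psd T" and i: "i < n"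
  shows "0 \<le> Re (T $$ (i,i))"
  using psdD[OF p T, of "vec n (\<lambda>k. if k = i then 1 else 0)"] quad_one[OF T i] by simp

lemma unit_vec_is: "unit_vec n i = vec n (\<lambda>k. if k = i then 1 else 0)"
  unfolding unit_vec_def by (rule eq_vecI, auto)

lemma mult3_vec:
  assumes S: "S \<in> carrier_mat n n" and E: "E \<in> carrier_mat n n" and v: "v \<in> carrier_vec n"
  shows "(S * E * S) *\<^sub>v v = S *\<^sub>v (E *\<^sub>v (S *\<^sub>v v))"
proof -
  have SE: "S * E \<in> carrier_mat n n" using S E by simp
  have "(S * E * S) *\<^sub>v v = (S * E) *\<^sub>v (S *\<^sub>v v)" by (rule assoc_mult_mat_vec[OF SE S v])
  also have "\<dots> = S *\<^sub>v (E *\<^sub>v (S *\<^sub>v v))" by (rule assoc_mult_mat_vec[OF S E], insert S v, simp)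
  finally show ?thesis .
qed

lemma sandwich_psd:
  assumes S: "S \<in> carrier_mat n n" and hS: "adj S = S" and E: "E \<in> carrier_mat n n" and pE: "psd E"
  shows "psd (S * E * S)"
proof (rule psdI)
  show "S * E * S \<in> carrier_mat n n" using S E by simp
  fix v :: "complex vec" assume v: "v \<in> carrier_vec n"
  have Sv: "S *\<^sub>v v \<in> carrier_vec n" using S v by simp
  have ESv: "E *\<^sub>v (S *\<^sub>v v) \<in> carrier_vec n" using E Sv by simp
  have "((S * E * S) *\<^sub>v v) \<bullet>c v = (E *\<^sub>v (S *\<^sub>v v)) \<bullet>c (S *\<^sub>v v)"
    unfolding mult3_vec[OF S E v] by (rule herm_mult_vec[OF hS S ESv v])
  thus "Im (((S * E * S) *\<^sub>v v) \<bullet>c v) = 0 \<and> 0 \<le> Re (((S * E * S) *\<^sub>v v) \<bullet>c v)"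
    using psdD[OF pE E Sv] by simp
qed

lemma fid_lower:
  assumes r: "density d \<rho>" and s: "density d \<sigma>" and eta: "0 \<le> \<eta>" "\<eta> \<le> 1"
  shows "\<eta>^2 \<le> fidelity (erasure d \<eta> \<rho>) (erasure d \<eta> \<sigma>)"
proof -
  let ?N = "d+1"
  let ?a = "unit_vec ?N d"
  define Er where "Er = erasure d \<eta> \<rho>"
  define Es where "Es = erasure d \<eta> \<sigma>"
  have Er: "Er \<in> carrier_mat ?N ?N" "psd Er" unfolding Er_def using erasure_psd[OF r eta] by auto
  have Es: "Es \<in> carrier_mat ?N ?N" "psd Es" unfolding Es_def using erasure_psd[OF s eta] by auto
  define S where "S = msqrt Er"
  have S: "S \<in> carrier_mat ?N ?N" "psd S" "S * S = Er" unfolding S_def using msqrt_props[OF Er] by auto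
  have hS: "adj S = S" using psd_adj[OF S(2) S(1)] .
  have Era: "Er *\<^sub>v ?a = complex_of_real \<eta> \<cdot>\<^sub>v ?a"
    unfolding Er_def erasure_alpha[OF density_carrier[OF r]] density_trace[OF r] by simp
  have "(S * S) *\<^sub>v ?a = complex_of_real ((sqrt \<eta>)^2) \<cdot>\<^sub>v ?a" using Era S eta by simp
  from psd_sqrt_eigen[OF S(1) S(2) alpha_carrier this] 
  have Sa: "S *\<^sub>v ?a = complex_of_real (sqrt \<eta>) \<cdot>\<^sub>v ?a" using eta by simp
  have Esa: "Es *\<^sub>v ?a = complex_of_real \<eta> \<cdot>\<^sub>v ?a"
    unfolding Es_def erasure_alpha[OF density_carrier[OF s]] density_trace[OF s] by simp
  define M where "M = S * Es * S"
  have M: "M \<in> carrier_mat ?N ?N" "psd M" unfolding M_def using S Es sandwich_psd[OF S(1) hS Es] by auto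
  have "M *\<^sub>v ?a = S *\<^sub>v (Es *\<^sub>v (complex_of_real (sqrt \<eta>) \<cdot>\<^sub>v ?a))"
    unfolding M_def mult3_vec[OF S(1) Es(1) alpha_carrier] Sa ..
  also have "\<dots> = (complex_of_real (sqrt \<eta>) * complex_of_real \<eta> * complex_of_real (sqrt \<eta>)) \<cdot>\<^sub>v ?a"
    using Es S Esa Sa by (simp add: mult_mat_vec[of _ ?N ?N] smult_smult_assoc)
  also have "complex_of_real (sqrt \<eta>) * complex_of_real \<eta> * complex_of_real (sqrt \<eta>) = complex_of_real (\<eta>^2)"
    using eta by (simp flip: of_real_mult add: power2_eq_square)
  finally have Ma: "M *\<^sub>v ?a = complex_of_real (\<eta>^2) \<cdot>\<^sub>v ?a" .
  define T where "T = msqrt M"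
  have T: "T \<in> carrier_mat ?N ?N" "psd T" "T * T = M" unfolding T_def using msqrt_props[OF M] by auto
  have "(T * T) *\<^sub>v ?a = complex_of_real (\<eta>^2) \<cdot>\<^sub>v ?a" using T Ma by simp
  from psd_sqrt_eigen[OF T(1) T(2) alpha_carrier this eta(1)]
  have Ta: "T *\<^sub>v ?a = complex_of_real \<eta> \<cdot>\<^sub>v ?a" .
  have Tdd: "T $$ (d,d) = complex_of_real \<eta>"
  proof -
    have "T $$ (d,d) = (T *\<^sub>v ?a) \<bullet>c ?a" using quad_one[OF T(1), of d] by (simp add: unit_vec_is)
    also have "\<dots> = complex_of_real \<eta>" unfolding Ta by (simp add: cs_smult_left[of _ ?N])
    finally show ?thesis .
  qed
  have "Re (mtrace T) = (\<Sum>i<?N. Re (T $$ (i,i)))" unfolding mtrace_def using T(1) by simp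
  also have "\<dots> = (\<Sum>i<d. Re (T $$ (i,i))) + Re (T $$ (d,d))" by simp
  also have "\<dots> \<ge> \<eta>"
  proof -
    have "0 \<le> (\<Sum>i<d. Re (T $$ (i,i)))" using psd_diag_nonneg[OF T(1) T(2)] by (auto intro!: sum_nonneg)
    thus ?thesis using Tdd by simp
  qed
  finally have tr: "\<eta> \<le> Re (mtrace T)" .
  have "fidelity Er Es = (Re (mtrace T))^2" unfolding fidelity_def T_def M_def S_def ..
  moreover have "\<eta>^2 \<le> (Re (mtrace T))^2" using tr eta by (simp add: power_mono)
  ultimately show ?thesis unfolding Er_def Es_def by simp
qed

lemma mat_eq_by_vec:
  fixes A B :: "complex mat"
  assumes A: "A \<in> carrier_mat n n" and B: "B \<in> carrier_mat n n"
    and e: "\<And>x. x \<in> carrier_vec n \<Longrightarrow> A *\<^sub>v x = B *\<^sub>v x"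
  shows "A = B"
proof (rule eq_matI)
  fix i j assume "i < dim_row B" "j < dim_col B"
  hence ij: "i < n" "j < n" using B by auto
  have "A $$ (i,j) = (A *\<^sub>v unit_vec n j) $ i" using A ij by simp
  also have "\<dots> = (B *\<^sub>v unit_vec n j) $ i" using e[of "unit_vec n j"] ij by simp
  also have "\<dots> = B $$ (i,j)" using B ij by simp
  finally show "A $$ (i,j) = B $$ (i,j)" .
qed (insert A B, auto)

lemma ketbra_dims[simp]: "dim_row (ketbra v) = dim_vec v" "dim_col (ketbra v) = dim_vec v"
  unfolding ketbra_def by auto

lemma ketbra_carrier[simp]: "v \<in> carrier_vec d \<Longrightarrow> ketbra v \<in> carrier_mat d d"
  unfolding ketbra_def by auto

lemma ketbra_mv: assumes v: "v \<in> carrier_vec d" and x: "x \<in> carrier_vec d"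
  shows "ketbra v *\<^sub>v x = (x \<bullet>c v) \<cdot>\<^sub>v v"
proof (rule eq_vecI)
  fix i assume "i < dim_vec ((x \<bullet>c v) \<cdot>\<^sub>v v)"
  hence i: "i < d" using v by simp
  have "(ketbra v *\<^sub>v x) $ i = (\<Sum>k<d. ketbra v $$ (i,k) * x $ k)"
    by (rule mult_vec_index_sum[OF ketbra_carrier[OF v] x i])
  also have "\<dots> = v $ i * (\<Sum>k<d. x $ k * cnj (v $ k))"
    unfolding sum_distrib_left using v i by (auto simp: ketbra_def intro!: sum.cong)
  also have "\<dots> = ((x \<bullet>c v) \<cdot>\<^sub>v v) $ i" using i v x by (simp add: cscal[of _ d])
  finally show "(ketbra v *\<^sub>v x) $ i = ((x \<bullet>c v) \<cdot>\<^sub>v v) $ i" .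
qed (insert v, simp)

lemma ketbra_trace: "v \<in> carrier_vec d \<Longrightarrow> mtrace (ketbra v) = v \<bullet>c v"
  unfolding mtrace_def ketbra_def by (simp add: cscal[of _ d])

lemma ketbra_density: assumes v: "v \<in> carrier_vec d" and vv: "v \<bullet>c v = 1"
  shows "density d (ketbra v)"
  unfolding density_def
proof (intro conjI)
  show "ketbra v \<in> carrier_mat d d" using v by simp
  show "mtrace (ketbra v) = 1" using ketbra_trace[OF v] vv by simp
  show "psd (ketbra v)"
  proof (rule psdI[OF ketbra_carrier[OF v]])
    fix x :: "complex vec" assume x: "x \<in> carrier_vec d"
    have "(ketbra v *\<^sub>v x) \<bullet>c x = (x \<bullet>c v) * (v \<bullet>c x)" unfolding ketbra_mv[OF v x]
      using v x by (simp add: cs_smult_left[of _ d])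
    also have "\<dots> = (x \<bullet>c v) * cnj (x \<bullet>c v)" using cs_comm[OF x v] by simp
    also have "\<dots> = complex_of_real ((cmod (x \<bullet>c v))^2)" by (rule complex_norm_square[symmetric])
    finally show "Im ((ketbra v *\<^sub>v x) \<bullet>c x) = 0 \<and> 0 \<le> Re ((ketbra v *\<^sub>v x) \<bullet>c x)" by simp
  qed
qed

definition padv :: "nat \<Rightarrow> complex vec \<Rightarrow> complex vec" where
  "padv d v = vec (d+1) (\<lambda>i. if i < d then v $ i else 0)"

lemma padv_carrier[simp]: "padv d v \<in> carrier_vec (d+1)" unfolding padv_def by simp

lemma padv_cs: assumes x: "x \<in> carrier_vec (d+1)" and v: "v \<in> carrier_vec d"
  shows "x \<bullet>c padv d v = (\<Sum>k<d. x $ k * cnj (v $ k))"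
  unfolding cscal[OF x padv_carrier] by (simp add: padv_def)

lemma alpha_cs: assumes x: "(x::complex vec) \<in> carrier_vec (d+1)"
  shows "x \<bullet>c unit_vec (d+1) d = x $ d"
proof -
  have c: "(unit_vec (d+1) d :: complex vec) \<in> carrier_vec (d+1)" by simp
  have "x \<bullet>c unit_vec (d+1) d = (\<Sum>i<d+1. x $ i * cnj (unit_vec (d+1) d $ i))" by (rule cscal[OF x c])
  also have "\<dots> = (\<Sum>i<d+1. x $ i * (if i = d then 1 else 0))" by (rule sum.cong, auto)
  also have "\<dots> = x $ d" using sum_delta_mult[of d "d+1" "\<lambda>i. x $ i" 1] by simp
  finally show ?thesis .
qed

definition D1 :: "nat \<Rightarrow> complex \<Rightarrow> complex mat" where
  "D1 d c = mat (d+1) (d+1) (\<lambda>(i,j). if i = d \<and> j = d then c else 0)"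

lemma D1_carrier[simp]: "D1 d c \<in> carrier_mat (d+1) (d+1)" unfolding D1_def by simp

lemma D1_mv: assumes x: "x \<in> carrier_vec (d+1)"
  shows "D1 d c *\<^sub>v x = (c * x $ d) \<cdot>\<^sub>v unit_vec (d+1) d"
proof (rule eq_vecI)
  fix i assume "i < dim_vec ((c * x $ d) \<cdot>\<^sub>v unit_vec (d+1) d)"
  hence i: "i < d+1" by simp
  have "(D1 d c *\<^sub>v x) $ i = (\<Sum>k<d+1. D1 d c $$ (i,k) * x $ k)"
    by (rule mult_vec_index_sum[OF D1_carrier x i])
  also have "\<dots> = (\<Sum>k<d+1. x $ k * (if k = d then (if i = d then c else 0) else 0))"
    unfolding D1_def using i by (auto intro!: sum.cong)
  also have "\<dots> = x $ d * (if i = d then c else 0)" by (rule sum_delta_mult, simp)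
  also have "\<dots> = ((c * x $ d) \<cdot>\<^sub>v unit_vec (d+1) d) $ i" using i by (auto simp: unit_vec_def)
  finally show "(D1 d c *\<^sub>v x) $ i = ((c * x $ d) \<cdot>\<^sub>v unit_vec (d+1) d) $ i" .
qed (simp add: D1_def)

lemma D1_mult: "D1 d c * D1 d c' = D1 d (c * c')"
proof (rule mat_eq_by_vec[of _ "d+1"])
  show "D1 d c * D1 d c' \<in> carrier_mat (d+1) (d+1)" using D1_carrier[of d] by (meson mult_carrier_mat)
  show "D1 d (c * c') \<in> carrier_mat (d+1) (d+1)" by (rule D1_carrier)
  fix x :: "complex vec" assume x: "x \<in> carrier_vec (d+1)"
  have "(D1 d c * D1 d c') *\<^sub>v x = D1 d c *\<^sub>v (D1 d c' *\<^sub>v x)"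
    by (rule assoc_mult_mat_vec[OF D1_carrier D1_carrier x])
  also have "\<dots> = (c * (c' * x $ d)) \<cdot>\<^sub>v unit_vec (d+1) d"
    unfolding D1_mv[OF x] by (subst D1_mv, simp, simp)
  also have "\<dots> = D1 d (c * c') *\<^sub>v x" unfolding D1_mv[OF x] by (simp add: mult.assoc)
  finally show "(D1 d c * D1 d c') *\<^sub>v x = D1 d (c * c') *\<^sub>v x" .
qed

lemma D1_psd: "0 \<le> r \<Longrightarrow> psd (D1 d (complex_of_real r))"
proof (rule psdI[OF D1_carrier])
  fix x :: "complex vec" assume r: "0 \<le> r" and x: "x \<in> carrier_vec (d+1)"
  have "(D1 d (complex_of_real r) *\<^sub>v x) \<bullet>c x = complex_of_real r * x $ d * (unit_vec (d+1) d \<bullet>c x)"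
    unfolding D1_mv[OF x] using x by (simp add: cs_smult_left[of _ "d+1"])
  also have "unit_vec (d+1) d \<bullet>c x = cnj (x $ d)" using cs_comm[OF x alpha_carrier] alpha_cs[OF x] by simp
  also have "complex_of_real r * x $ d * cnj (x $ d) = complex_of_real (r * (cmod (x $ d))^2)"
    by (simp add: mult.assoc flip: complex_norm_square)
  finally show "Im ((D1 d (complex_of_real r) *\<^sub>v x) \<bullet>c x) = 0 \<and> 0 \<le> Re ((D1 d (complex_of_real r) *\<^sub>v x) \<bullet>c x)"
    using r by simp
qed

lemma D1_trace: "mtrace (D1 d c) = c"
proof -
  have "mtrace (D1 d c) = (\<Sum>i<d+1. (if i = d then c else 0) * 1)" unfolding mtrace_def D1_def
    by (auto intro!: sum.cong)
  also have "\<dots> = c * 1" by (rule sum_delta_mult', simp)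
  finally show ?thesis by simp
qed

lemma erasure_ketbra_mv:
  assumes p: "\<phi> \<in> carrier_vec d" and pp: "\<phi> \<bullet>c \<phi> = 1" and x: "x \<in> carrier_vec (d+1)"
  shows "erasure d \<eta> (ketbra \<phi>) *\<^sub>v x = (complex_of_real (1-\<eta>) * (x \<bullet>c padv d \<phi>)) \<cdot>\<^sub>v padv d \<phi>
     + (complex_of_real \<eta> * x $ d) \<cdot>\<^sub>v unit_vec (d+1) d"
proof (rule eq_vecI)
  fix i assume "i < dim_vec ((complex_of_real (1-\<eta>) * (x \<bullet>c padv d \<phi>)) \<cdot>\<^sub>v padv d \<phi>
     + (complex_of_real \<eta> * x $ d) \<cdot>\<^sub>v unit_vec (d+1) d)"
  hence i: "i < d+1" by (simp add: padv_def)
  have tr: "mtrace (ketbra \<phi>) = 1" using ketbra_trace[OF p] pp by simp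
  show "(erasure d \<eta> (ketbra \<phi>) *\<^sub>v x) $ i = ((complex_of_real (1-\<eta>) * (x \<bullet>c padv d \<phi>)) \<cdot>\<^sub>v padv d \<phi>
     + (complex_of_real \<eta> * x $ d) \<cdot>\<^sub>v unit_vec (d+1) d) $ i"
  proof (cases "i < d")
    case True
    have "(\<Sum>k<d. ketbra \<phi> $$ (i,k) * x $ k) = \<phi> $ i * (\<Sum>k<d. x $ k * cnj (\<phi> $ k))"
      unfolding sum_distrib_left using True p by (auto simp: ketbra_def intro!: sum.cong)
    thus ?thesis unfolding erasure_mv[OF x i] padv_cs[OF x p] using True i
      by (simp add: padv_def unit_vec_def)
  next
    case False
    hence "i = d" using i by simp
    thus ?thesis unfolding erasure_mv[OF x i] using tr by (simp add: padv_def unit_vec_def)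
  qed
qed (simp add: padv_def)

lemma erasure_pad_zero:
  assumes p: "\<phi> \<in> carrier_vec d" and s: "\<sigma> \<in> carrier_mat d d" and sp: "\<sigma> *\<^sub>v \<phi> = 0\<^sub>v d"
  shows "erasure d \<eta> \<sigma> *\<^sub>v padv d \<phi> = 0\<^sub>v (d+1)"
proof (rule eq_vecI)
  fix i assume "i < dim_vec (0\<^sub>v (d+1) :: complex vec)"
  hence i: "i < d+1" by simp
  show "(erasure d \<eta> \<sigma> *\<^sub>v padv d \<phi>) $ i = 0\<^sub>v (d+1) $ i"
  proof (cases "i < d")
    case True
    have "(\<Sum>k<d. \<sigma> $$ (i,k) * padv d \<phi> $ k) = (\<sigma> *\<^sub>v \<phi>) $ i"
      unfolding mult_vec_index_sum[OF s p True] by (rule sum.cong, auto simp: padv_def)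
    thus ?thesis unfolding erasure_mv[OF padv_carrier i] using True i sp by simp
  next
    case False
    hence "i = d" using i by simp
    thus ?thesis unfolding erasure_mv[OF padv_carrier i] by (simp add: padv_def)
  qed
qed simp

lemma padv_carrier_Suc[simp]: "padv d v \<in> carrier_vec (Suc d)" using padv_carrier[of d v] by simp
lemma D1_carrier_Suc[simp]: "D1 d c \<in> carrier_mat (Suc d) (Suc d)" using D1_carrier[of d c] by simp

lemma fid_upper:
  assumes p: "\<phi> \<in> carrier_vec d" and pp: "\<phi> \<bullet>c \<phi> = 1" and s: "density d \<sigma>"
    and sp: "\<sigma> *\<^sub>v \<phi> = 0\<^sub>v d" and eta: "0 \<le> \<eta>" "\<eta> \<le> 1"
  shows "fidelity (erasure d \<eta> (ketbra \<phi>)) (erasure d \<eta> \<sigma>) = \<eta>^2"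
proof -
  let ?N = "d+1"
  let ?a = "unit_vec ?N d :: complex vec"
  define q where "q = padv d \<phi>"
  have q: "q \<in> carrier_vec ?N" unfolding q_def by simp
  have a: "?a \<in> carrier_vec ?N" by simp
  have qq: "q \<bullet>c q = 1" unfolding q_def padv_cs[OF padv_carrier p] using pp
    by (simp add: cscal[OF p p] padv_def)
  have aq: "?a \<bullet>c q = 0" unfolding q_def padv_cs[OF a p] by (auto intro!: sum.neutral)
  have qa: "q \<bullet>c ?a = 0" unfolding alpha_cs[OF q] by (simp add: q_def padv_def)
  have aa: "?a \<bullet>c ?a = 1" unfolding alpha_cs[OF a] by simp
  have rho: "density d (ketbra \<phi>)" by (rule ketbra_density[OF p pp])
  define Er where "Er = erasure d \<eta> (ketbra \<phi>)"
  define Es where "Es = erasure d \<eta> \<sigma>"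
  have Er: "Er \<in> carrier_mat ?N ?N" "psd Er" unfolding Er_def using erasure_psd[OF rho eta] by auto
  have Es: "Es \<in> carrier_mat ?N ?N" "psd Es" unfolding Es_def using erasure_psd[OF s eta] by auto
  have Erx: "Er *\<^sub>v x = (complex_of_real (1-\<eta>) * (x \<bullet>c q)) \<cdot>\<^sub>v q + (complex_of_real \<eta> * x $ d) \<cdot>\<^sub>v ?a"
    if x: "x \<in> carrier_vec ?N" for x
    unfolding Er_def q_def by (rule erasure_ketbra_mv[OF p pp x])
  define S where "S = msqrt Er"
  have S: "S \<in> carrier_mat ?N ?N" "psd S" "S * S = Er" unfolding S_def using msqrt_props[OF Er] by auto
  have hS: "adj S = S" using psd_adj[OF S(2) S(1)] .
  have Era: "Er *\<^sub>v ?a = complex_of_real \<eta> \<cdot>\<^sub>v ?a"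
    unfolding Er_def erasure_alpha[OF density_carrier[OF rho]] density_trace[OF rho] by simp
  have "(S * S) *\<^sub>v ?a = complex_of_real ((sqrt \<eta>)^2) \<cdot>\<^sub>v ?a" using Era S eta by simp
  from psd_sqrt_eigen[OF S(1) S(2) a this] 
  have Sa: "S *\<^sub>v ?a = complex_of_real (sqrt \<eta>) \<cdot>\<^sub>v ?a" using eta by simp
  have Esa: "Es *\<^sub>v ?a = complex_of_real \<eta> \<cdot>\<^sub>v ?a"
    unfolding Es_def erasure_alpha[OF density_carrier[OF s]] density_trace[OF s] by simp
  have Esq: "Es *\<^sub>v q = 0\<^sub>v ?N" unfolding Es_def q_def
    by (rule erasure_pad_zero[OF p density_carrier[OF s] sp])
  have kill: "S *\<^sub>v r = 0\<^sub>v ?N" if r: "r \<in> carrier_vec ?N" "r \<bullet>c q = 0" "r $ d = 0" for r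
  proof -
    have "(S * S) *\<^sub>v r = Er *\<^sub>v r" using S by simp
    also have "\<dots> = 0\<^sub>v ?N" unfolding Erx[OF r(1)] using r q by (intro eq_vecI, auto)
    also have "\<dots> = complex_of_real (0^2) \<cdot>\<^sub>v r" using r by (intro eq_vecI, auto)
    finally have "(S * S) *\<^sub>v r = complex_of_real (0^2) \<cdot>\<^sub>v r" .
    from psd_sqrt_eigen[OF S(1) S(2) r(1) this] show ?thesis using r by (intro eq_vecI, auto)
  qed
  have span: "S *\<^sub>v x = ((S *\<^sub>v x) \<bullet>c q) \<cdot>\<^sub>v q + ((S *\<^sub>v x) $ d) \<cdot>\<^sub>v ?a" if x: "x \<in> carrier_vec ?N" for x
  proof -
    define y where "y = S *\<^sub>v x"
    have y: "y \<in> carrier_vec ?N" unfolding y_def using S x by simp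
    define ca where "ca = y \<bullet>c q"
    define cb where "cb = y $ d"
    define r where "r = y - ca \<cdot>\<^sub>v q - cb \<cdot>\<^sub>v ?a"
    have r: "r \<in> carrier_vec ?N" unfolding r_def using y q by simp
    have rq: "r \<bullet>c q = 0" unfolding r_def using y q qq aq
      by (simp add: cs_minus_left[of _ ?N] cs_smult_left[of _ ?N] ca_def)
    have rd: "r $ d = 0" unfolding r_def cb_def using y q by (simp add: q_def padv_def)
    have Sr: "S *\<^sub>v r = 0\<^sub>v ?N" by (rule kill[OF r rq rd])
    have qr: "q \<bullet>c r = 0" using cs_comm[OF r q] rq by simp
    have ar: "?a \<bullet>c r = 0" using cs_comm[OF r a] alpha_cs[OF r] rd by simp
    have yr: "y \<bullet>c r = 0" unfolding y_def using herm_mult_vec[OF hS S(1) x r] Sr x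
      by (simp add: cs_zero_right[of _ ?N])
    have "r \<bullet>c r = y \<bullet>c r - ca * (q \<bullet>c r) - cb * (?a \<bullet>c r)"
      unfolding r_def[of ] using y q r by (simp add: cs_minus_left[of _ ?N] cs_smult_left[of _ ?N] r_def[symmetric])
    hence "r \<bullet>c r = 0" using yr qr ar by simp
    hence "r = 0\<^sub>v ?N" using conjugate_square_eq_0_vec[OF r] by simp
    hence r0: "r = 0\<^sub>v ?N" .
    have "y = ca \<cdot>\<^sub>v q + cb \<cdot>\<^sub>v ?a"
    proof (rule eq_vecI)
      fix i assume "i < dim_vec (ca \<cdot>\<^sub>v q + cb \<cdot>\<^sub>v ?a)"
      hence i: "i < ?N" by simp
      have "r $ i = 0" using r0 i by simp
      moreover have "r $ i = y $ i - ca * q $ i - cb * ?a $ i" unfolding r_def using i y q by simp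
      ultimately show "y $ i = (ca \<cdot>\<^sub>v q + cb \<cdot>\<^sub>v ?a) $ i" using i q
        by (cases "i = d", auto simp: algebra_simps)
    qed (insert y, simp)
    thus ?thesis unfolding y_def ca_def cb_def by simp
  qed
  define M where "M = S * Es * S"
  have Mx: "M *\<^sub>v x = (complex_of_real (\<eta>^2) * x $ d) \<cdot>\<^sub>v ?a" if x: "x \<in> carrier_vec ?N" for x
  proof -
    define y where "y = S *\<^sub>v x"
    have y: "y \<in> carrier_vec ?N" unfolding y_def using S x by simp
    have yd: "y $ d = complex_of_real (sqrt \<eta>) * x $ d"
    proof -
      have "y $ d = y \<bullet>c ?a" using alpha_cs[OF y] by simp
      also have "\<dots> = x \<bullet>c (S *\<^sub>v ?a)" unfolding y_def by (rule herm_mult_vec[OF hS S(1) x a])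
      also have "\<dots> = complex_of_real (sqrt \<eta>) * x $ d" unfolding Sa using x alpha_cs[OF x]
        by (simp add: cs_smult_right[of _ ?N])
      finally show ?thesis .
    qed
    have "Es *\<^sub>v y = Es *\<^sub>v ((y \<bullet>c q) \<cdot>\<^sub>v q + (y $ d) \<cdot>\<^sub>v ?a)" using span[OF x] unfolding y_def by simp
    also have "\<dots> = (y \<bullet>c q) \<cdot>\<^sub>v (Es *\<^sub>v q) + (y $ d) \<cdot>\<^sub>v (Es *\<^sub>v ?a)"
      using Es q by (simp add: mult_add_distrib_mat_vec[of _ ?N ?N] mult_mat_vec[of _ ?N ?N])
    also have "\<dots> = (y $ d * complex_of_real \<eta>) \<cdot>\<^sub>v ?a" unfolding Esq Esa
      by (intro eq_vecI, auto)
    finally have Esy: "Es *\<^sub>v y = (y $ d * complex_of_real \<eta>) \<cdot>\<^sub>v ?a" .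
    have "M *\<^sub>v x = S *\<^sub>v (Es *\<^sub>v y)" unfolding M_def y_def by (rule mult3_vec[OF S(1) Es(1) x])
    also have "\<dots> = (y $ d * complex_of_real \<eta>) \<cdot>\<^sub>v (S *\<^sub>v ?a)" unfolding Esy using S
      by (simp add: mult_mat_vec[of _ ?N ?N])
    also have "\<dots> = (y $ d * complex_of_real \<eta> * complex_of_real (sqrt \<eta>)) \<cdot>\<^sub>v ?a" unfolding Sa
      by (simp add: smult_smult_assoc)
    also have "y $ d * complex_of_real \<eta> * complex_of_real (sqrt \<eta>) = complex_of_real (\<eta>^2) * x $ d"
    proof -
      have "sqrt \<eta> * sqrt \<eta> = \<eta>" using eta by simp
      hence "complex_of_real (sqrt \<eta>) * complex_of_real (sqrt \<eta>) = complex_of_real \<eta>"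
        by (metis of_real_mult)
      thus ?thesis unfolding yd by (simp add: power2_eq_square algebra_simps)
    qed
    finally show ?thesis .
  qed
  have M: "M = D1 d (complex_of_real (\<eta>^2))"
  proof (rule mat_eq_by_vec[of _ ?N])
    show "M \<in> carrier_mat ?N ?N" unfolding M_def using S Es by simp
    show "D1 d (complex_of_real (\<eta>^2)) \<in> carrier_mat ?N ?N" by (rule D1_carrier)
    fix x :: "complex vec" assume x: "x \<in> carrier_vec ?N"
    show "M *\<^sub>v x = D1 d (complex_of_real (\<eta>^2)) *\<^sub>v x" unfolding Mx[OF x] D1_mv[OF x] ..
  qed
  have T: "msqrt M = D1 d (complex_of_real \<eta>)"
    unfolding M by (rule msqrt_eq[OF D1_carrier D1_psd[OF eta(1)]], simp add: D1_mult power2_eq_square)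
  have "fidelity Er Es = (Re (mtrace (msqrt M)))^2" unfolding fidelity_def M_def S_def ..
  also have "\<dots> = \<eta>^2" unfolding T D1_trace by simp
  finally show ?thesis unfolding Er_def Es_def .
qed

lemma block_sum: "(\<Sum>p<(n::nat)*d. f p) = (\<Sum>i<n. \<Sum>b<d. f (i*d + b))"
proof (induction n)
  case 0 thus ?case by simp
next
  case (Suc n)
  have "(\<Sum>p<Suc n * d. f p) = (\<Sum>p\<in>{0..<n*d}. f p) + (\<Sum>p\<in>{n*d..<n*d+d}. f p)"
    using sum.atLeastLessThan_concat[of 0 "n*d" "n*d+d" f] by (simp add: lessThan_atLeast0 add.commute)
  also have "(\<Sum>p\<in>{n*d..<n*d+d}. f p) = (\<Sum>b<d. f (n*d + b))"
    using sum.shift_bounds_nat_ivl[of f 0 "n*d" d] by (simp add: lessThan_atLeast0 add.commute)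
  finally show ?case using Suc by (simp add: lessThan_atLeast0)
qed

lemma div_mod_block: "b < (d::nat) \<Longrightarrow> (i*d + b) div d = i" "b < (d::nat) \<Longrightarrow> (i*d + b) mod d = b"
  by auto

lemma block_lt: "i < n \<Longrightarrow> b < d \<Longrightarrow> i*d + b < n*(d::nat)"
proof -
  assume a: "i < n" "b < d"
  have "Suc i * d \<le> n * d" using a(1) by (intro mult_le_mono1) simp
  thus ?thesis using a(2) by simp
qed

lemma trace_map_cp:
  fixes e :: "complex vec"
  assumes e: "e \<in> carrier_vec d" and d: "d > 0"
    and X: "X \<in> carrier_mat (n*d) (n*d)" and pX: "psd X"
  shows "psd (ampl n d (\<lambda>\<rho>. mtrace \<rho> \<cdot>\<^sub>m ketbra e) X)"
proof -
  let ?N = "n*d"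
  define Y where "Y = ampl n d (\<lambda>\<rho>. mtrace \<rho> \<cdot>\<^sub>m ketbra e) X"
  define T where "T i j = (\<Sum>a<d. X $$ (i*d+a, j*d+a))" for i j
  have Yc: "Y \<in> carrier_mat ?N ?N" unfolding Y_def ampl_def by simp
  have Yij: "Y $$ (i*d+b, j*d+b') = T i j * (e $ b * cnj (e $ b'))"
    if "i < n" "b < d" "j < n" "b' < d" for i j b b'
  proof -
    have lt: "i*d+b < ?N" "j*d+b' < ?N" using that block_lt by auto
    show ?thesis unfolding Y_def ampl_def using lt that e d
      by (simp add: div_mod_block mtrace_def T_def ketbra_def)
  qed
  show ?thesis unfolding Y_def[symmetric]
  proof (rule psdI[OF Yc])
    fix v :: "complex vec" assume v: "v \<in> carrier_vec ?N"
    define w where "w i = (\<Sum>b<d. cnj (e $ b) * v $ (i*d+b))" for i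
    define u where "u a = vec ?N (\<lambda>r. if r mod d = a then w (r div d) else 0)" for a
    have uc: "u a \<in> carrier_vec ?N" for a unfolding u_def by simp
    have "(Y *\<^sub>v v) \<bullet>c v = (\<Sum>p<?N. \<Sum>q<?N. Y $$ (p,q) * v $ q * cnj (v $ p))"
      by (rule quad_form[OF Yc v])
    also have "\<dots> = (\<Sum>i<n. \<Sum>b<d. \<Sum>j<n. \<Sum>b'<d. Y $$ (i*d+b,j*d+b') * v $ (j*d+b') * cnj (v $ (i*d+b)))"
      by (simp add: block_sum)
    also have "\<dots> = (\<Sum>i<n. \<Sum>b<d. \<Sum>j<n. \<Sum>b'<d. T i j * (e $ b * cnj (e $ b')) * v $ (j*d+b') * cnj (v $ (i*d+b)))"
      by (intro sum.cong refl, simp add: Yij)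
    also have "\<dots> = (\<Sum>i<n. \<Sum>j<n. T i j * w j * cnj (w i))"
    proof (rule sum.cong[OF refl])
      fix i
      have "(\<Sum>b<d. \<Sum>j<n. \<Sum>b'<d. T i j * (e $ b * cnj (e $ b')) * v $ (j*d+b') * cnj (v $ (i*d+b)))
        = (\<Sum>j<n. \<Sum>b<d. \<Sum>b'<d. T i j * (e $ b * cnj (e $ b')) * v $ (j*d+b') * cnj (v $ (i*d+b)))"
        by (rule sum.swap)
      also have "\<dots> = (\<Sum>j<n. T i j * w j * cnj (w i))"
      proof (rule sum.cong[OF refl])
        fix j
        show "(\<Sum>b<d. \<Sum>b'<d. T i j * (e $ b * cnj (e $ b')) * v $ (j*d+b') * cnj (v $ (i*d+b))) = T i j * w j * cnj (w i)"
          unfolding w_def cnj_sum sum_distrib_left sum_distrib_right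
          by (intro sum.cong refl, simp add: mult_ac)
      qed
      finally show "(\<Sum>b<d. \<Sum>j<n. \<Sum>b'<d. T i j * (e $ b * cnj (e $ b')) * v $ (j*d+b') * cnj (v $ (i*d+b)))
        = (\<Sum>j<n. T i j * w j * cnj (w i))" .
    qed
    also have "\<dots> = (\<Sum>a<d. \<Sum>i<n. \<Sum>j<n. X $$ (i*d+a, j*d+a) * w j * cnj (w i))"
    proof -
      have "(\<Sum>i<n. \<Sum>j<n. T i j * w j * cnj (w i)) = (\<Sum>i<n. \<Sum>j<n. \<Sum>a<d. X $$ (i*d+a, j*d+a) * w j * cnj (w i))"
        unfolding T_def sum_distrib_right ..
      also have "\<dots> = (\<Sum>i<n. \<Sum>a<d. \<Sum>j<n. X $$ (i*d+a, j*d+a) * w j * cnj (w i))"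
        by (rule sum.cong[OF refl], rule sum.swap)
      also have "\<dots> = (\<Sum>a<d. \<Sum>i<n. \<Sum>j<n. X $$ (i*d+a, j*d+a) * w j * cnj (w i))"
        by (rule sum.swap)
      finally show ?thesis .
    qed
    also have "\<dots> = (\<Sum>a<d. (X *\<^sub>v u a) \<bullet>c u a)"
    proof (rule sum.cong[OF refl])
      fix a assume "a \<in> {..<d}"
      hence a: "a < d" by simp
      have "(X *\<^sub>v u a) \<bullet>c u a = (\<Sum>p<?N. \<Sum>q<?N. X $$ (p,q) * u a $ q * cnj (u a $ p))"
        by (rule quad_form[OF X uc])
      also have "\<dots> = (\<Sum>i<n. \<Sum>b<d. \<Sum>j<n. \<Sum>b'<d. X $$ (i*d+b,j*d+b') * u a $ (j*d+b') * cnj (u a $ (i*d+b)))"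
        by (simp add: block_sum)
      also have "\<dots> = (\<Sum>i<n. \<Sum>b<d. \<Sum>j<n. \<Sum>b'<d. X $$ (i*d+b,j*d+b') * (if b' = a then w j else 0) * cnj (if b = a then w i else 0))"
        by (intro sum.cong refl, simp add: u_def block_lt)
      also have "\<dots> = (\<Sum>i<n. \<Sum>b<d. \<Sum>j<n. if b = a then X $$ (i*d+a,j*d+a) * w j * cnj (w i) else 0)"
      proof (intro sum.cong refl)
        fix i b j
        have "(\<Sum>b'<d. X $$ (i*d+b,j*d+b') * (if b' = a then w j else 0) * cnj (if b = a then w i else 0))
          = (\<Sum>b'<d. if b' = a then X $$ (i*d+b,j*d+a) * w j * cnj (if b = a then w i else 0) else 0)"
          by (rule sum.cong, auto)
        also have "\<dots> = X $$ (i*d+b,j*d+a) * w j * cnj (if b = a then w i else 0)"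
          using a by (subst sum.delta[OF finite_lessThan], simp)
        also have "\<dots> = (if b = a then X $$ (i*d+a,j*d+a) * w j * cnj (w i) else 0)" by auto
        finally show "(\<Sum>b'<d. X $$ (i*d+b,j*d+b') * (if b' = a then w j else 0) * cnj (if b = a then w i else 0))
          = (if b = a then X $$ (i*d+a,j*d+a) * w j * cnj (w i) else 0)" .
      qed
      also have "\<dots> = (\<Sum>i<n. \<Sum>b<d. if b = a then (\<Sum>j<n. X $$ (i*d+a,j*d+a) * w j * cnj (w i)) else 0)"
        by (intro sum.cong refl, auto)
      also have "\<dots> = (\<Sum>i<n. \<Sum>j<n. X $$ (i*d+a, j*d+a) * w j * cnj (w i))"
        using a by (intro sum.cong[OF refl], subst sum.delta[OF finite_lessThan], simp)
      finally show "(\<Sum>i<n. \<Sum>j<n. X $$ (i*d+a, j*d+a) * w j * cnj (w i)) = (X *\<^sub>v u a) \<bullet>c u a" by simp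
    qed
    finally have eq: "(Y *\<^sub>v v) \<bullet>c v = (\<Sum>a<d. (X *\<^sub>v u a) \<bullet>c u a)" .
    have "\<forall>a. Im ((X *\<^sub>v u a) \<bullet>c u a) = 0 \<and> 0 \<le> Re ((X *\<^sub>v u a) \<bullet>c u a)"
      using psdD[OF pX X uc] by blast
    thus "Im ((Y *\<^sub>v v) \<bullet>c v) = 0 \<and> 0 \<le> Re ((Y *\<^sub>v v) \<bullet>c v)"
      unfolding eq by (simp add: Im_sum Re_sum sum_nonneg)
  qed
qed

lemma kdim: "kernel.dim d (A :: complex mat) = subspace_dim d (mat_kernel A)"
  unfolding subspace_dim_def by simp

lemma zero_dim: "subspace_dim d {0\<^sub>v d} = 0"
proof -
  have "mat_kernel (1\<^sub>m d :: complex mat) = {0\<^sub>v d}"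
    unfolding mat_kernel_def by auto
  thus ?thesis using kernel_one_mat(1)[where n = d and 'a = complex] kdim[where d = d and A = "1\<^sub>m d"] by simp
qed

lemma orth_dim:
  fixes e :: "complex vec"
  assumes e: "e \<in> carrier_vec d" and ee: "e \<bullet>c e = 1"
  shows "subspace_dim d {\<psi> \<in> carrier_vec d. \<psi> \<bullet>c e = 0} = d - 1"
proof -
  have "e \<noteq> 0\<^sub>v d" using ee e by (auto simp: cs_zero_left[of _ d])
  then obtain k where k: "k < d" "e $ k \<noteq> 0" using e by (auto simp: vec_eq_iff)
  define j0 where "j0 = (LEAST k. e $ k \<noteq> 0)"
  have j0: "e $ j0 \<noteq> 0" unfolding j0_def by (rule LeastI[of _ k], rule k(2))
  have j0k: "j0 \<le> k" unfolding j0_def by (rule Least_le, rule k(2))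
  hence j0d: "j0 < d" using k by simp
  have below: "e $ j = 0" if "j < j0" for j using not_less_Least[of j "\<lambda>k. e $ k \<noteq> 0"] that j0_def by auto
  define R where "R = mat 1 d (\<lambda>(_,k). cnj (e $ k) / cnj (e $ j0))"
  have R: "R \<in> carrier_mat 1 d" unfolding R_def by simp
  have "pivot_fun R (\<lambda>_. j0) d"
    by (rule pivot_funI[of _ 1], insert j0 j0d below, auto simp: R_def)
  hence ref: "row_echelon_form R" unfolding row_echelon_form_def using R by auto
  have "row R 0 \<noteq> 0\<^sub>v d"
  proof
    assume "row R 0 = 0\<^sub>v d"
    hence "row R 0 $ j0 = 0" using j0d by simp
    thus False using j0d j0 by (simp add: R_def)
  qed
  hence "{i. i < 1 \<and> row R i \<noteq> 0\<^sub>v d} = {0}" by auto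
  hence card: "card {i. i < 1 \<and> row R i \<noteq> 0\<^sub>v d} = 1" by simp
  have "kernel.dim d R = d - 1" using find_base_vectors(6)[OF ref R] card by simp
  moreover have "mat_kernel R = {\<psi> \<in> carrier_vec d. \<psi> \<bullet>c e = 0}"
  proof -
    have "R *\<^sub>v \<psi> = 0\<^sub>v 1 \<longleftrightarrow> \<psi> \<bullet>c e = 0" if psi: "\<psi> \<in> carrier_vec d" for \<psi>
    proof -
      have "(R *\<^sub>v \<psi>) $ 0 = (\<Sum>k<d. R $$ (0,k) * \<psi> $ k)" by (rule mult_vec_index_sum[OF R psi], simp)
      also have "\<dots> = (\<Sum>k<d. \<psi> $ k * cnj (e $ k)) / cnj (e $ j0)"
        unfolding sum_divide_distrib by (rule sum.cong, auto simp: R_def)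
      also have "\<dots> = (\<psi> \<bullet>c e) / cnj (e $ j0)" using cscal[OF psi e] by simp
      finally have r0: "(R *\<^sub>v \<psi>) $ 0 = (\<psi> \<bullet>c e) / cnj (e $ j0)" .
      have "R *\<^sub>v \<psi> = 0\<^sub>v 1 \<longleftrightarrow> (R *\<^sub>v \<psi>) $ 0 = 0"
        using R by (auto simp: vec_eq_iff)
      thus ?thesis unfolding r0 using j0 by simp
    qed
    thus ?thesis unfolding mat_kernel_def using R by auto
  qed
  ultimately show ?thesis using kdim[where d = d and A = R] by simp
qed

lemma ampl1: assumes X: "X \<in> carrier_mat d d" and L: "\<Lambda> X \<in> carrier_mat d d"
  shows "ampl 1 d \<Lambda> X = \<Lambda> X"
proof -
  have inner: "mat d d (\<lambda>(a, b). X $$ ((p div d) * d + a, (q div d) * d + b)) = X" if "p < d" "q < d" for p q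
    using that X by (intro eq_matI, auto)
  show ?thesis
  proof (rule eq_matI)
    fix i j assume "i < dim_row (\<Lambda> X)" "j < dim_col (\<Lambda> X)"
    hence ij: "i < d" "j < d" using L by auto
    show "ampl 1 d \<Lambda> X $$ (i,j) = \<Lambda> X $$ (i,j)" unfolding ampl_def using ij inner[OF ij] by simp
  qed (insert L, auto simp: ampl_def)
qed

lemma channel_density:
  assumes ch: "channel d \<Lambda>" and r: "density d \<rho>"
  shows "density d (\<Lambda> \<rho>)"
proof -
  have rc: "\<rho> \<in> carrier_mat d d" using density_carrier[OF r] .
  have Lc: "\<Lambda> \<rho> \<in> carrier_mat d d" using ch rc unfolding channel_def linear_map_on_def by auto
  have tr: "mtrace (\<Lambda> \<rho>) = 1" using ch rc density_trace[OF r] unfolding channel_def trace_preserving_def by auto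
  have "psd (ampl 1 d \<Lambda> \<rho>)" using ch rc density_psd[OF r] unfolding channel_def completely_positive_def
    by auto
  hence "psd (\<Lambda> \<rho>)" using ampl1[where X=\<rho> and \<Lambda>=\<Lambda> and d=d, OF rc Lc] by simp
  thus ?thesis unfolding density_def using Lc tr by simp
qed

lemma mtrace_add: "(A::complex mat) \<in> carrier_mat d d \<Longrightarrow> B \<in> carrier_mat d d \<Longrightarrow> mtrace (A + B) = mtrace A + mtrace B"
  unfolding mtrace_def by (simp add: sum.distrib)

lemma mtrace_smult: "(A::complex mat) \<in> carrier_mat d d \<Longrightarrow> mtrace (c \<cdot>\<^sub>m A) = c * mtrace A"
  unfolding mtrace_def by (simp add: sum_distrib_left)

lemma trace_channel:
  fixes e :: "complex vec"
  assumes e: "e \<in> carrier_vec d" and ee: "e \<bullet>c e = 1" and d: "d > 0"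
  shows "channel d (\<lambda>\<rho>. mtrace \<rho> \<cdot>\<^sub>m ketbra e)"
  unfolding channel_def
proof (intro conjI)
  have K: "ketbra e \<in> carrier_mat d d" using e by simp
  show "linear_map_on d (\<lambda>\<rho>. mtrace \<rho> \<cdot>\<^sub>m ketbra e)"
    unfolding linear_map_on_def
  proof (intro conjI ballI allI)
    fix A :: "complex mat" assume "A \<in> carrier_mat d d"
    show "mtrace A \<cdot>\<^sub>m ketbra e \<in> carrier_mat d d" using K by simp
  next
    fix A B :: "complex mat" assume A: "A \<in> carrier_mat d d" and B: "B \<in> carrier_mat d d"
    show "mtrace (A + B) \<cdot>\<^sub>m ketbra e = mtrace A \<cdot>\<^sub>m ketbra e + mtrace B \<cdot>\<^sub>m ketbra e"
      unfolding mtrace_add[OF A B] using K by (intro eq_matI, auto simp: algebra_simps)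
  next
    fix c :: complex and A :: "complex mat" assume A: "A \<in> carrier_mat d d"
    show "mtrace (c \<cdot>\<^sub>m A) \<cdot>\<^sub>m ketbra e = c \<cdot>\<^sub>m (mtrace A \<cdot>\<^sub>m ketbra e)"
      unfolding mtrace_smult[OF A] using K by (intro eq_matI, auto)
  qed
  show "completely_positive d (\<lambda>\<rho>. mtrace \<rho> \<cdot>\<^sub>m ketbra e)"
    unfolding completely_positive_def using trace_map_cp[OF e d] by blast
  show "trace_preserving d (\<lambda>\<rho>. mtrace \<rho> \<cdot>\<^sub>m ketbra e)"
    unfolding trace_preserving_def using mtrace_smult[OF K] ketbra_trace[OF e] ee by simp
qed

lemma trace_vkernel:
  fixes e :: "complex vec"
  assumes e: "e \<in> carrier_vec d" and ee: "e \<bullet>c e = 1"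
  shows "vkernel d (\<lambda>\<rho>. mtrace \<rho> \<cdot>\<^sub>m ketbra e) = {\<psi> \<in> carrier_vec d. \<psi> \<bullet>c e = 0}"
proof -
  have K: "ketbra e \<in> carrier_mat d d" using e by simp
  have e0: "e \<noteq> 0\<^sub>v d" using ee e by (auto simp: cs_zero_left[of _ d])
  have mv: "(t \<cdot>\<^sub>m ketbra e) *\<^sub>v \<psi> = (t * (\<psi> \<bullet>c e)) \<cdot>\<^sub>v e" if psi: "\<psi> \<in> carrier_vec d" for t \<psi>
  proof -
    have "(t \<cdot>\<^sub>m ketbra e) *\<^sub>v \<psi> = t \<cdot>\<^sub>v (ketbra e *\<^sub>v \<psi>)"
      using K psi by (intro eq_vecI, auto simp: scalar_prod_def sum_distrib_left mult.assoc)
    also have "\<dots> = (t * (\<psi> \<bullet>c e)) \<cdot>\<^sub>v e" unfolding ketbra_mv[OF e psi] by (simp add: smult_smult_assoc)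
    finally show ?thesis .
  qed
  have zero_iff: "(c \<cdot>\<^sub>v e = 0\<^sub>v d) \<longleftrightarrow> c = 0" for c :: complex
  proof
    assume "c \<cdot>\<^sub>v e = 0\<^sub>v d"
    hence "(c \<cdot>\<^sub>v e) \<bullet>c e = 0" using e by (simp add: cs_zero_left[of _ d])
    thus "c = 0" using e ee by (simp add: cs_smult_left[of _ d])
  qed (insert e, auto)
  have dens: "density d (ketbra e)" by (rule ketbra_density[OF e ee])
  show ?thesis
  proof (intro subset_antisym subsetI)
    fix \<psi> assume "\<psi> \<in> vkernel d (\<lambda>\<rho>. mtrace \<rho> \<cdot>\<^sub>m ketbra e)"
    hence psi: "\<psi> \<in> carrier_vec d" and z: "(mtrace (ketbra e) \<cdot>\<^sub>m ketbra e) *\<^sub>v \<psi> = 0\<^sub>v d"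
      unfolding vkernel_def using dens by auto
    thus "\<psi> \<in> {\<psi> \<in> carrier_vec d. \<psi> \<bullet>c e = 0}"
      using mv[OF psi] zero_iff density_trace[OF dens] by simp
  next
    fix \<psi> assume "\<psi> \<in> {\<psi> \<in> carrier_vec d. \<psi> \<bullet>c e = 0}"
    hence psi: "\<psi> \<in> carrier_vec d" and z: "\<psi> \<bullet>c e = 0" by auto
    show "\<psi> \<in> vkernel d (\<lambda>\<rho>. mtrace \<rho> \<cdot>\<^sub>m ketbra e)"
      unfolding vkernel_def using psi mv[OF psi] z e by auto
  qed
qed

theorem mainTheorem1:
  fixes d :: nat and \<eta> \<epsilon> :: real
  assumes "d \<ge> 2" and "0 \<le> \<eta>" and "\<eta> \<le> 1" and "0 \<le> \<epsilon>" and "\<epsilon> \<le> 1"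
  shows "(\<eta>\<^sup>2 \<ge> 1 - \<epsilon> \<longrightarrow>
           (\<forall>e1. e1 \<in> carrier_vec d \<and> e1 \<bullet>c e1 = 1 \<longrightarrow>
              (let \<Lambda> = (\<lambda>\<rho>. mtrace \<rho> \<cdot>\<^sub>m ketbra e1) in
                 admissible d \<eta> \<epsilon> \<Lambda> \<and>
                 subspace_dim d (vkernel d \<Lambda>) = d - 1 \<and>
                 compressibility d \<Lambda> = 1)))
       \<and> (\<eta>\<^sup>2 < 1 - \<epsilon> \<longrightarrow>
           (\<forall>\<Lambda>. admissible d \<eta> \<epsilon> \<Lambda> \<longrightarrow>
              vkernel d \<Lambda> = {0\<^sub>v d} \<and> compressibility d \<Lambda> = 0))"
proof (intro conjI impI allI)
  have d0: "d > 0" using assms(1) by simp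
  have eta: "0 \<le> \<eta>" "\<eta> \<le> 1" using assms(2,3) .
  {
    assume big: "\<eta>\<^sup>2 \<ge> 1 - \<epsilon>"
    fix e1 :: "complex vec" assume e1: "e1 \<in> carrier_vec d \<and> e1 \<bullet>c e1 = 1"
    hence e: "e1 \<in> carrier_vec d" and ee: "e1 \<bullet>c e1 = 1" by auto
    define L where "L = (\<lambda>\<rho>. mtrace \<rho> \<cdot>\<^sub>m ketbra e1)"
    have ch: "channel d L" unfolding L_def by (rule trace_channel[OF e ee d0])
    have adm: "admissible d \<eta> \<epsilon> L" unfolding admissible_def
    proof (intro conjI allI impI)
      show "channel d L" by (rule ch)
      fix \<rho> assume r: "density d \<rho>"
      have "L \<rho> = ketbra e1" unfolding L_def density_trace[OF r] by (intro eq_matI, auto)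
      thus "1 - \<epsilon> \<le> fidelity (erasure d \<eta> \<rho>) (erasure d \<eta> (L \<rho>))"
        using fid_lower[OF r ketbra_density[OF e ee] eta] big by simp
    qed
    have dim: "subspace_dim d (vkernel d L) = d - 1"
      unfolding L_def trace_vkernel[OF e ee] by (rule orth_dim[OF e ee])
    have comp: "compressibility d L = 1" unfolding compressibility_def dim using assms(1) by simp
    show "let \<Lambda> = (\<lambda>\<rho>. mtrace \<rho> \<cdot>\<^sub>m ketbra e1) in
                 admissible d \<eta> \<epsilon> \<Lambda> \<and>
                 subspace_dim d (vkernel d \<Lambda>) = d - 1 \<and>
                 compressibility d \<Lambda> = 1"
      unfolding Let_def L_def[symmetric] using adm dim comp by simp
  }
  {
    assume small: "\<eta>\<^sup>2 < 1 - \<epsilon>"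
    fix \<Lambda> assume adm: "admissible d \<eta> \<epsilon> \<Lambda>"
    have ch: "channel d \<Lambda>" and fid: "\<And>\<rho>. density d \<rho> \<Longrightarrow> 1 - \<epsilon> \<le> fidelity (erasure d \<eta> \<rho>) (erasure d \<eta> (\<Lambda> \<rho>))"
      using adm unfolding admissible_def by auto
    have ker: "vkernel d \<Lambda> = {0\<^sub>v d}"
    proof (intro subset_antisym subsetI)
      fix \<psi> assume psi: "\<psi> \<in> vkernel d \<Lambda>"
      hence pc: "\<psi> \<in> carrier_vec d" and pk: "\<And>\<rho>. density d \<rho> \<Longrightarrow> \<Lambda> \<rho> *\<^sub>v \<psi> = 0\<^sub>v d"
        unfolding vkernel_def by auto
      show "\<psi> \<in> {0\<^sub>v d}"
      proof (rule ccontr)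
        assume "\<psi> \<notin> {0\<^sub>v d}"
        hence nz: "\<psi> \<noteq> 0\<^sub>v d" by simp
        have pp: "\<psi> \<bullet>c \<psi> \<noteq> 0" using conjugate_square_eq_0_vec[OF pc] nz by simp
        define \<phi> where "\<phi> = nrm \<psi>"
        have phi: "\<phi> \<in> carrier_vec d" "\<phi> \<bullet>c \<phi> = 1" unfolding \<phi>_def using pc nrm_self[OF pc pp] by auto
        have rho: "density d (ketbra \<phi>)" by (rule ketbra_density[OF phi])
        have sig: "density d (\<Lambda> (ketbra \<phi>))" by (rule channel_density[OF ch rho])
        have sc: "\<Lambda> (ketbra \<phi>) \<in> carrier_mat d d" using density_carrier[OF sig] .
        define c where "c = complex_of_real (1 / sqrt (Re (\<psi> \<bullet>c \<psi>)))"
        have pe: "c \<cdot>\<^sub>v \<psi> = \<phi>" unfolding \<phi>_def nrm_def c_def ..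
        have "\<Lambda> (ketbra \<phi>) *\<^sub>v (c \<cdot>\<^sub>v \<psi>) = c \<cdot>\<^sub>v (\<Lambda> (ketbra \<phi>) *\<^sub>v \<psi>)"
          by (rule mult_mat_vec[OF sc pc])
        also have "\<dots> = 0\<^sub>v d" using pk[OF rho] by (intro eq_vecI, auto)
        finally have "\<Lambda> (ketbra \<phi>) *\<^sub>v \<phi> = 0\<^sub>v d" unfolding pe .
        from fid_upper[OF phi sig this eta] fid[OF rho] small show False by simp
      qed
    next
      fix x :: "complex vec" assume "x \<in> {0\<^sub>v d}"
      hence x: "x = 0\<^sub>v d" by simp
      have "\<Lambda> \<rho> *\<^sub>v 0\<^sub>v d = 0\<^sub>v d" if r: "density d \<rho>" for \<rho>
        using density_carrier[OF channel_density[OF ch r]] by (intro eq_vecI, auto simp: scalar_prod_def)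
      thus "x \<in> vkernel d \<Lambda>" unfolding vkernel_def x by simp
    qed
    show "vkernel d \<Lambda> = {0\<^sub>v d}" by (rule ker)
    show "compressibility d \<Lambda> = 0" unfolding compressibility_def ker zero_dim by simp
  }
qed

end
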